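(* Let $\mathcal{H}$ be a Hilbert space and $\mathcal{G}$ a normed space. Let $I=\{1,\dots,m\}$, $I_0=\{m+1,\dots,n\}$ (possibly $I_0=\emptyset$), and let $h_i:\mathcal{G}\times\mathcal{H}\to\mathbb{R}$, $i=1,\dots,n$, be jointly continuous functions whose partial gradients $\nabla_x h_i$ are jointly continuous. Define $F(p)=\{x\in\mathcal{H}\mid h_i(p,x)\le 0,\ i\in I,\ h_i(p,x)=0,\ i\in I_0\}$. Let $(p^0,x^0)\in\mathrm{gr}F$ and assume $F$ is lower semicontinuous at $(p^0,x^0)$ relative to $\mathrm{dom}F$. Then the following are equivalent: (a) $F$ is R-regular at $(p^0,x^0)$ relative to $\mathrm{dom}F$; (b) there exists $M>0$ such that for any sequences $p^k\to p^0$ with $p^k\in\mathrm{dom}F$ and $v^k\to x^0$ with $v^k\notin F(p^k)$, one has $\Lambda^M_{v^k}(p^k,x^k)\neq\emptyset$ for all $x^k\in\Pi_{F(p^k)}(v^k)$ and all $k$ sufficiently large.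
   Context: $\mathrm{dom}F=\{p\mid F(p)\neq\emptyset\}$, $\mathrm{gr}F=\{(p,x)\mid x\in F(p)\}$. $F$ is lower semicontinuous at $(p^0,x^0)$ relative to $P$ if for every neighbourhood $V(x^0)$ there is a neighbourhood $V(p^0)$ with $F(p)\cap V(x^0)\neq\emptyset$ for all $p\in V(p^0)\cap P$. $F$ is R-regular at $(p^0,x^0)$ relative to $P$ if there exist $M>0$ and neighbourhoods $V(p^0)$, $V(x^0)$ with $\mathrm{dist}(x,F(p))\le M\max\{0,\ h_i(p,x)\ (i\in I),\ |h_i(p,x)|\ (i\in I_0)\}$ for all $x\in V(x^0)$, $p\in V(p^0)\cap P$. For $v\in\mathcal{H}$, $\Pi_{F(p)}(v)=\{\tilde v\in F(p)\mid\|\tilde v-v\|=\mathrm{dist}(v,F(p))\}$. The Lagrange multiplier sets are $\Lambda_v(p,x)=\{\lambda\in\mathbb{R}^n\mid \frac{x-v}{\|x-v\|}+\sum_{i=1}^n\lambda_i\nabla_x h_i(p,x)=0,\ \lambda_i\ge0,\ \lambda_i h_i(p,x)=0 \text{ for } i\in I\}$ and $\Lambda^M_v(p,x)=\{\lambda\in\Lambda_v(p,x)\mid\sum_{i=1}^n|\lambda_i|\le M\}$. *)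

theory Defs
  imports "HOL-Analysis.Analysis"
begin

definition feas_map ::
  "(nat \<Rightarrow> 'g \<Rightarrow> 'h \<Rightarrow> real) \<Rightarrow> nat \<Rightarrow> nat \<Rightarrow> 'g \<Rightarrow> 'h set" where
  "feas_map h m n p =
     {x. (\<forall>i\<in>{1..m}. h i p x \<le> 0) \<and> (\<forall>i\<in>{m+1..n}. h i p x = 0)}"

definition dom_map :: "('g \<Rightarrow> 'h set) \<Rightarrow> 'g set" where
  "dom_map F = {p. F p \<noteq> {}}"

definition graph_map :: "('g \<Rightarrow> 'h set) \<Rightarrow> ('g \<times> 'h) set" where
  "graph_map F = {(p, x). x \<in> F p}"

definition lsc_rel ::
  "('g::topological_space \<Rightarrow> 'h::topological_space set) \<Rightarrow> 'g set \<Rightarrow> 'g \<Rightarrow> 'h \<Rightarrow> bool" where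
  "lsc_rel F P p0 x0 \<longleftrightarrow>
     (\<forall>V. open V \<and> x0 \<in> V \<longrightarrow>
        (\<exists>U. open U \<and> p0 \<in> U \<and> (\<forall>p\<in>U \<inter> P. F p \<inter> V \<noteq> {})))"

definition residual ::
  "(nat \<Rightarrow> 'g \<Rightarrow> 'h \<Rightarrow> real) \<Rightarrow> nat \<Rightarrow> nat \<Rightarrow> 'g \<Rightarrow> 'h \<Rightarrow> real" where
  "residual h m n p x =
     Max ({0} \<union> (\<lambda>i. h i p x) ` {1..m} \<union> (\<lambda>i. \<bar>h i p x\<bar>) ` {m+1..n})"

definition R_regular_rel ::
  "(nat \<Rightarrow> 'g::real_normed_vector \<Rightarrow> 'h::real_normed_vector \<Rightarrow> real) \<Rightarrow> nat \<Rightarrow> nat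
    \<Rightarrow> 'g set \<Rightarrow> 'g \<Rightarrow> 'h \<Rightarrow> bool" where
  "R_regular_rel h m n P p0 x0 \<longleftrightarrow>
     (\<exists>M>0. \<exists>U V. open U \<and> p0 \<in> U \<and> open V \<and> x0 \<in> V \<and>
        (\<forall>x\<in>V. \<forall>p\<in>U \<inter> P.
           infdist x (feas_map h m n p) \<le> M * residual h m n p x))"

definition proj_set :: "'h::metric_space set \<Rightarrow> 'h \<Rightarrow> 'h set" where
  "proj_set S v = {w \<in> S. dist w v = infdist v S}"

text \<open>Lagrange multipliers, lambda in R^n represented as nat \<Rightarrow> real vanishing outside {1..n}.
  gradx i p x is the partial gradient of h_i with respect to x.\<close>
definition Lagr ::
  "(nat \<Rightarrow> 'g \<Rightarrow> 'h \<Rightarrow> real) \<Rightarrow> (nat \<Rightarrow> 'g \<Rightarrow> 'h \<Rightarrow> 'h::real_normed_vector)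
    \<Rightarrow> nat \<Rightarrow> nat \<Rightarrow> 'h \<Rightarrow> 'g \<Rightarrow> 'h \<Rightarrow> (nat \<Rightarrow> real) set" where
  "Lagr h gradx m n v p x =
     {lam. (\<forall>i. i \<notin> {1..n} \<longrightarrow> lam i = 0) \<and>
           (1 / norm (x - v)) *\<^sub>R (x - v) + (\<Sum>i=1..n. lam i *\<^sub>R gradx i p x) = 0 \<and>
           (\<forall>i\<in>{1..m}. lam i \<ge> 0 \<and> lam i * h i p x = 0)}"

definition LagrM ::
  "real \<Rightarrow> (nat \<Rightarrow> 'g \<Rightarrow> 'h \<Rightarrow> real) \<Rightarrow> (nat \<Rightarrow> 'g \<Rightarrow> 'h \<Rightarrow> 'h::real_normed_vector)
    \<Rightarrow> nat \<Rightarrow> nat \<Rightarrow> 'h \<Rightarrow> 'g \<Rightarrow> 'h \<Rightarrow> (nat \<Rightarrow> real) set" where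
  "LagrM M h gradx m n v p x =
     {lam \<in> Lagr h gradx m n v p x. (\<Sum>i=1..n. \<bar>lam i\<bar>) \<le> M}"

end

theory Submission
  imports Defs "HOL-Analysis.Analysis"
begin

lemma lin_bound:
  fixes f :: "'h::real_inner \<Rightarrow> real" and G :: "'h \<Rightarrow> 'h"
  assumes der: "\<And>z. (f has_derivative (\<lambda>u. G z \<bullet> u)) (at z)"
    and B: "\<And>t. t \<in> {0..1} \<Longrightarrow> norm (G (y + t *\<^sub>R (w - y)) - G y) \<le> B"
  shows "\<bar>f w - f y - G y \<bullet> (w - y)\<bar> \<le> norm (w - y) * B"
proof -
  define \<phi> where "\<phi> t = f (y + t *\<^sub>R (w - y))" for t
  define D where "D t = G (y + t *\<^sub>R (w - y)) \<bullet> (w - y)" for t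
  have d: "(\<phi> has_vector_derivative D t) (at t within {0..1})" for t
  proof -
    have l: "((\<lambda>t. y + t *\<^sub>R (w - y)) has_derivative (\<lambda>s. s *\<^sub>R (w - y))) (at t within {0..1})"
      by (auto intro!: derivative_eq_intros)
    have "((\<lambda>t. f (y + t *\<^sub>R (w - y))) has_derivative (\<lambda>s. G (y + t *\<^sub>R (w - y)) \<bullet> (s *\<^sub>R (w - y)))) (at t within {0..1})"
      by (rule has_derivative_compose[OF l der])
    moreover have "(\<lambda>s. G (y + t *\<^sub>R (w - y)) \<bullet> (s *\<^sub>R (w - y))) = (\<lambda>s. s *\<^sub>R D t)"
      by (auto simp: D_def)
    ultimately show ?thesis unfolding has_vector_derivative_def \<phi>_def[abs_def] by simp
  qed
  have b: "norm (D t - D 0) \<le> norm (w - y) * B" if "t \<in> {0..1}" for t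
  proof -
    have "norm (D t - D 0) = \<bar>(G (y + t *\<^sub>R (w - y)) - G y) \<bullet> (w - y)\<bar>"
      by (simp add: D_def inner_diff_left)
    also have "\<dots> \<le> norm (G (y + t *\<^sub>R (w - y)) - G y) * norm (w - y)"
      by (rule Cauchy_Schwarz_ineq2)
    also have "\<dots> \<le> B * norm (w - y)"
      by (rule mult_right_mono[OF B[OF that]]) simp
    finally show ?thesis by (simp add: mult.commute)
  qed
  have "norm (\<phi> 1 - \<phi> 0 - (1 - 0) *\<^sub>R D 0) \<le> norm (1 - 0::real) * (norm (w - y) * B)"
    by (rule vector_differentiable_bound_linearization[where S="{0..1}"])
       (use d b in \<open>auto simp: closed_segment_eq_real_ivl\<close>)
  then show ?thesis by (simp add: \<phi>_def D_def)
qed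



lemma infdist_lessE:
  assumes "A \<noteq> {}" "infdist x A < r"
  obtains a where "a \<in> A" "dist x a < r"
proof -
  have "(INF a\<in>A. dist x a) < r" using assms by (simp add: infdist_notempty)
  then show ?thesis using that assms(1) by (subst (asm) cINF_less_iff) (auto intro: bdd_belowI[of _ 0])
qed

lemma approx_point:
  assumes "F \<noteq> {}" "e > 0"
  shows "\<exists>y\<in>F. (dist y c)\<^sup>2 \<le> (infdist c F)\<^sup>2 + e"
proof -
  define d where "d = infdist c F"
  have d0: "d \<ge> 0" by (simp add: d_def infdist_nonneg)
  define \<eta> where "\<eta> = min 1 (e / (2*d+1))"
  have eta: "\<eta> > 0" "\<eta> \<le> 1" "\<eta> * (2*d+1) \<le> e"
  proof -
    have p: "2*d+1 > 0" using d0 by simp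
    show "\<eta> > 0" "\<eta> \<le> 1" using assms p by (auto simp: \<eta>_def)
    have "\<eta> \<le> e / (2*d+1)" by (simp add: \<eta>_def)
    then have "\<eta> * (2*d+1) \<le> e / (2*d+1) * (2*d+1)" using p by (intro mult_right_mono) auto
    then show "\<eta> * (2*d+1) \<le> e" using p by simp
  qed
  obtain y where y: "y \<in> F" "dist c y < d + \<eta>"
    using infdist_lessE[OF assms(1), of c "d + \<eta>"] eta by (auto simp: d_def)
  have "dist y c \<le> d + \<eta>" using y by (simp add: dist_commute)
  then have "(dist y c)\<^sup>2 \<le> (d + \<eta>)\<^sup>2" by (simp add: power_mono)
  also have "\<dots> = d\<^sup>2 + \<eta> * (2*d + \<eta>)" by (simp add: power2_eq_square algebra_simps)
  also have "\<dots> \<le> d\<^sup>2 + \<eta> * (2*d+1)"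
    using eta d0 by (intro add_left_mono mult_left_mono) auto
  also have "\<dots> \<le> d\<^sup>2 + e" using eta by simp
  finally show ?thesis using y by (auto simp: d_def)
qed


lemma geo_cauchy:
  fixes f :: "nat \<Rightarrow> 'a::metric_space"
  assumes "\<And>n. dist (f (Suc n)) (f n) \<le> C * (1/2)^n"
  shows "dist (f (m + k)) (f m) \<le> 2 * C * (1/2)^m - 2 * C * (1/2)^(m+k)"
proof (induction k)
  case 0 then show ?case by simp
next
  case (Suc k)
  have "dist (f (m + Suc k)) (f m) \<le> dist (f (Suc (m + k))) (f (m+k)) + dist (f (m + k)) (f m)"
    by (simp add: dist_triangle)
  also have "\<dots> \<le> C * (1/2)^(m+k) + (2 * C * (1/2)^m - 2 * C * (1/2)^(m+k))"
    using assms Suc by (intro add_mono) auto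
  also have "\<dots> = 2 * C * (1/2)^m - 2 * C * (1/2)^(m + Suc k)" by simp
  finally show ?case .
qed


lemma geo_cauchy2:
  fixes f :: "nat \<Rightarrow> 'a::metric_space"
  assumes "\<And>n. dist (f (Suc n)) (f n) \<le> C * (1/2)^n"
  shows "Cauchy f" "\<And>n. dist (f n) (f 0) \<le> 2 * C"
proof -
  have "0 \<le> dist (f (Suc 0)) (f 0)" by (rule zero_le_dist)
  moreover have "dist (f (Suc 0)) (f 0) \<le> C" using assms[of 0] by simp
  ultimately have C: "C \<ge> 0" by linarith
  have le: "dist (f n) (f m) \<le> 2 * C * (1/2)^m" if "m \<le> n" for m n
  proof -
    define k where "k = n - m"
    have k: "n = m + k" using that by (simp add: k_def)
    have "0 \<le> 2 * C * (1/2::real)^(m+k)" using C by simp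
    then show ?thesis using geo_cauchy[OF assms, of m k] unfolding k by linarith
  qed
  show "dist (f n) (f 0) \<le> 2 * C" for n using le[of 0 n] by simp
  show "Cauchy f"
  proof (rule metric_CauchyI)
    fix e :: real assume e: "e > 0"
    have q: "e / (4*C+1) > 0" using e C by simp
    obtain M where M: "(1/2::real)^M < e / (4*C+1)"
      using real_arch_pow_inv[OF q, of "1/2"] by auto
    have "4 * C * (1/2::real)^M \<le> (4*C+1) * (1/2)^M"
      by (rule mult_right_mono) auto
    also have "\<dots> < (4*C+1) * (e / (4*C+1))"
      by (rule mult_strict_left_mono[OF M]) (use C in simp)
    also have "\<dots> = e" using C by simp
    finally have lt: "4 * C * (1/2::real)^M < e" .
    have "dist (f m) (f n) < e" if "m \<ge> M" "n \<ge> M" for m n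
    proof -
      have "dist (f m) (f n) \<le> dist (f m) (f M) + dist (f n) (f M)" by (rule dist_triangle2)
      then show ?thesis using le[OF that(1)] le[OF that(2)] lt by linarith
    qed
    then show "\<exists>M. \<forall>m\<ge>M. \<forall>n\<ge>M. dist (f m) (f n) < e" by blast
  qed
qed


lemma avg_identity:
  fixes z c y :: "'a::real_inner"
  assumes "l \<ge> 0"
  shows "(1+l) * (norm (z - (1/(1+l)) *\<^sub>R (c + l *\<^sub>R y)))\<^sup>2
     = (norm (z - c))\<^sup>2 + l * (norm (z - y))\<^sup>2 - l/(1+l) * (norm (c - y))\<^sup>2"
proof -
  define c' where "c' = (1/(1+l)) *\<^sub>R (c + l *\<^sub>R y)"
  have lp: "1 + l > 0" using assms by simp
  have c1: "(1+l) *\<^sub>R c' = c + l *\<^sub>R y" using lp by (simp add: c'_def)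
  have e1: "(1+l) *\<^sub>R (z - c') = (z - c) + l *\<^sub>R (z - y)"
    unfolding scaleR_diff_right c1 by (simp add: scaleR_add_left)
  define A where "A = z - c"
  define B where "B = z - y"
  have e2: "c - y = B - A" by (simp add: A_def B_def)
  have "(norm ((1+l) *\<^sub>R (z - c')))\<^sup>2 = (norm (A + l *\<^sub>R B))\<^sup>2"
    unfolding e1 A_def B_def ..
  also have "\<dots> = A \<bullet> A + 2 * l * (A \<bullet> B) + l^2 * (B \<bullet> B)"
    unfolding power2_norm_eq_inner inner_add_left inner_add_right inner_scaleR_left inner_scaleR_right
    by (simp add: inner_commute[of B A] power2_eq_square algebra_simps)
  finally have L: "(1+l)^2 * (norm (z - c'))\<^sup>2 = A \<bullet> A + 2 * l * (A \<bullet> B) + l^2 * (B \<bullet> B)"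
    using lp by (simp add: power_mult_distrib)
  have nb: "(norm (B - A))\<^sup>2 = B \<bullet> B - 2 * (A \<bullet> B) + A \<bullet> A"
    unfolding power2_norm_eq_inner inner_diff_left inner_diff_right by (simp add: inner_commute[of B A])
  have na: "(norm A)\<^sup>2 = A \<bullet> A" "(norm B)\<^sup>2 = B \<bullet> B" by (simp_all add: power2_norm_eq_inner)
  define RHS where "RHS = (norm A)\<^sup>2 + l * (norm B)\<^sup>2 - l/(1+l) * (norm (B - A))\<^sup>2"
  have "(1+l) * RHS = (1+l) * (A \<bullet> A) + (1+l) * l * (B \<bullet> B) - (1+l) * (l/(1+l)) * (B \<bullet> B - 2 * (A \<bullet> B) + A \<bullet> A)"
    unfolding RHS_def nb na by (simp only: distrib_left right_diff_distrib mult.assoc)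
  also have "(1+l) * (l/(1+l)) = l" using lp by simp
  also have "(1+l) * (A \<bullet> A) + (1+l) * l * (B \<bullet> B) - l * (B \<bullet> B - 2 * (A \<bullet> B) + A \<bullet> A) = A \<bullet> A + 2 * l * (A \<bullet> B) + l^2 * (B \<bullet> B)"
    by (simp add: algebra_simps power2_eq_square)
  finally have R0: "(1+l) * RHS = (1+l)^2 * (norm (z - c'))\<^sup>2" using L by simp
  have "(1+l) * ((1+l) * (norm (z - c'))\<^sup>2) = (1+l)^2 * (norm (z - c'))\<^sup>2"
    by (simp add: power2_eq_square)
  then have "(1+l) * ((1+l) * (norm (z - c'))\<^sup>2) = (1+l) * RHS" using R0 by simp
  then have F: "(1+l) * (norm (z - c'))\<^sup>2 = RHS" using lp by simp
  show ?thesis using F[unfolded RHS_def e2[symmetric]] unfolding A_def B_def c'_def .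
qed



lemma avg_sub:
  fixes c y :: "'a::real_vector"
  assumes "l \<ge> 0"
  shows "(1/(1+l)) *\<^sub>R (c + l *\<^sub>R y) - y = (1/(1+l)) *\<^sub>R (c - y)"
    and "(1/(1+l)) *\<^sub>R (c + l *\<^sub>R y) - c = (l/(1+l)) *\<^sub>R (y - c)"
proof -
  have lp: "1 + l \<noteq> 0" using assms by simp
  show "(1/(1+l)) *\<^sub>R (c + l *\<^sub>R y) - y = (1/(1+l)) *\<^sub>R (c - y)"
  proof -
    have h: "(1+l) *\<^sub>R ((1/(1+l)) *\<^sub>R (c + l *\<^sub>R y)) = c + l *\<^sub>R y" using lp by simp
    have "(1+l) *\<^sub>R ((1/(1+l)) *\<^sub>R (c + l *\<^sub>R y) - y) = (1+l) *\<^sub>R ((1/(1+l)) *\<^sub>R (c - y))"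
      using lp unfolding scaleR_diff_right h by (simp add: scaleR_add_left)
    then show ?thesis using lp by (metis scaleR_cancel_left)
  qed
  show "(1/(1+l)) *\<^sub>R (c + l *\<^sub>R y) - c = (l/(1+l)) *\<^sub>R (y - c)"
  proof -
    have h: "(1+l) *\<^sub>R ((1/(1+l)) *\<^sub>R (c + l *\<^sub>R y)) = c + l *\<^sub>R y" using lp by simp
    have "(1+l) *\<^sub>R ((1/(1+l)) *\<^sub>R (c + l *\<^sub>R y) - c) = (1+l) *\<^sub>R ((l/(1+l)) *\<^sub>R (y - c))"
      using lp unfolding scaleR_diff_right h by (simp add: scaleR_add_left)
    then show ?thesis using lp by (metis scaleR_cancel_left)
  qed
qed

lemma dense_proj:
  fixes F :: "'h::{real_inner,complete_space} set"
  assumes cl: "closed F" and ne: "F \<noteq> {}" and e: "e > 0"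
  shows "\<exists>w. dist w v < e \<and> (\<exists>y\<in>F. dist y w = infdist w F)"
proof -
  define d0 where "d0 = infdist v F"
  have d0: "d0 \<ge> 0" by (simp add: d0_def infdist_nonneg)
  define R where "R = d0 + 2"
  have R: "R > 0" using d0 by (simp add: R_def)
  define a where "a = min 1 (e / (4*R))"
  have a: "a > 0" "a \<le> 1" "a * (4*R) \<le> e"
    using e R by (auto simp: a_def min_def field_simps)
  define lam where "lam n = a * (1/2)^n" for n :: nat
  define eps where "eps n = a * (1/8)^n" for n :: nat
  have lam0: "lam n > 0" "lam n \<le> 1" for n
    using a by (auto simp: lam_def intro!: mult_le_one power_le_one)
  have eps0: "eps n > 0" for n using a by (simp add: eps_def)
  obtain y0 where y0: "y0 \<in> F" "(dist y0 v)\<^sup>2 \<le> (infdist v F)\<^sup>2 + eps 0"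
    using approx_point[OF ne eps0[of 0]] by blast
  define step where "step n cy = (let c' = (1/(1+lam n)) *\<^sub>R (fst cy + lam n *\<^sub>R snd cy)
      in (c', SOME y. y \<in> F \<and> (dist y c')\<^sup>2 \<le> (infdist c' F)\<^sup>2 + eps (Suc n)))" for n cy
  define s where "s = rec_nat (v, y0) step"
  define c where "c n = fst (s n)" for n
  define y where "y n = snd (s n)" for n
  have c0: "c 0 = v" and y00: "y 0 = y0" by (simp_all add: c_def y_def s_def)
  have cS: "c (Suc n) = (1/(1+lam n)) *\<^sub>R (c n + lam n *\<^sub>R y n)" for n
    by (simp add: c_def y_def s_def step_def Let_def)
  have yS: "y (Suc n) = (SOME z. z \<in> F \<and> (dist z (c (Suc n)))\<^sup>2 \<le> (infdist (c (Suc n)) F)\<^sup>2 + eps (Suc n))" for n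
    by (simp add: c_def y_def s_def step_def Let_def)
  have P1: "y n \<in> F \<and> (dist (y n) (c n))\<^sup>2 \<le> (infdist (c n) F)\<^sup>2 + eps n" for n
  proof (cases n)
    case 0 then show ?thesis using y0 by (simp add: c0 y00)
  next
    case (Suc k)
    show ?thesis unfolding Suc yS
      by (rule someI_ex) (use approx_point[OF ne eps0[of "Suc k"]] in auto)
  qed
  have dS: "dist (y n) (c (Suc n)) \<le> dist (y n) (c n)" for n
  proof -
    have "dist (y n) (c (Suc n)) = norm (c (Suc n) - y n)" by (simp add: dist_norm norm_minus_commute)
    also have "\<dots> = norm ((1/(1+lam n)) *\<^sub>R (c n - y n))"
      unfolding cS avg_sub(1)[OF less_imp_le[OF lam0(1)]] ..
    also have "\<dots> = (1/(1+lam n)) * dist (y n) (c n)"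
      using lam0[of n] by (simp add: dist_norm norm_minus_commute)
    also have "\<dots> \<le> dist (y n) (c n)"
      using lam0[of n] by (simp add: field_simps)
    finally show ?thesis .
  qed
  have P4: "(dist (y n) (c n))\<^sup>2 \<le> d0\<^sup>2 + 2*a - eps n" for n
  proof (induction n)
    case 0 then show ?case using y0 by (simp add: c0 y00 d0_def eps_def)
  next
    case (Suc n)
    have "infdist (c (Suc n)) F \<le> dist (y n) (c (Suc n))"
      using P1[of n] infdist_le[of "y n" F "c (Suc n)"] by (simp add: dist_commute)
    also have "\<dots> \<le> dist (y n) (c n)" by (rule dS)
    finally have "(infdist (c (Suc n)) F)\<^sup>2 \<le> (dist (y n) (c n))\<^sup>2"
      by (simp add: power_mono infdist_nonneg)
    moreover have "eps n = 8 * eps (Suc n)" by (simp add: eps_def)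
    ultimately show ?case using P1[of "Suc n"] Suc eps0[of "Suc n"] by linarith
  qed
  have PR: "dist (y n) (c n) \<le> R" for n
  proof -
    have "(dist (y n) (c n))\<^sup>2 \<le> R\<^sup>2"
    proof -
      have "R\<^sup>2 = d0\<^sup>2 + 4*d0 + 4" unfolding R_def power2_eq_square by algebra
      moreover have "eps n > 0" "a \<le> 1" "d0 \<ge> 0" "(dist (y n) (c n))\<^sup>2 \<le> d0\<^sup>2 + 2*a - eps n"
        using P4[of n] eps0[of n] a d0 by auto
      ultimately show ?thesis by linarith
    qed
    then show ?thesis using R by (metis power2_le_imp_le less_imp_le)
  qed
  have P5: "dist (c (Suc n)) (c n) \<le> (a * R) * (1/2)^n" for n
  proof -
    have "dist (c (Suc n)) (c n) = norm (c (Suc n) - c n)" by (simp add: dist_norm)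
    also have "\<dots> = norm ((lam n/(1+lam n)) *\<^sub>R (y n - c n))"
      unfolding cS avg_sub(2)[OF less_imp_le[OF lam0(1)]] ..
    also have "\<dots> = (lam n/(1+lam n)) * dist (y n) (c n)"
      using lam0[of n] by (simp add: dist_norm)
    also have "\<dots> \<le> lam n * R"
    proof -
      have "lam n/(1+lam n) \<le> lam n" using lam0[of n] by (simp add: field_simps)
      then show ?thesis using PR[of n] lam0[of n]
        by (intro mult_mono) auto
    qed
    finally show ?thesis by (simp add: lam_def mult_ac)
  qed
  have P6: "dist (y (Suc n)) (y n) \<le> 2 * (1/2)^n" for n
  proof -
    define l where "l = lam n"
    have l: "l > 0" "l \<le> 1" using lam0[of n] by (auto simp: l_def)
    have cS': "c (Suc n) = (1/(1+l)) *\<^sub>R (c n + l *\<^sub>R y n)" by (simp add: cS l_def)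
    define \<kappa> where "\<kappa> = l/(1+l) * (norm (c n - y n))\<^sup>2"
    have I1: "(1+l) * (norm (y (Suc n) - c (Suc n)))\<^sup>2 = (norm (y (Suc n) - c n))\<^sup>2 + l * (norm (y (Suc n) - y n))\<^sup>2 - \<kappa>"
      unfolding cS' \<kappa>_def by (rule avg_identity) (use l in auto)
    have I2: "(1+l) * (norm (y n - c (Suc n)))\<^sup>2 = (norm (y n - c n))\<^sup>2 - \<kappa>"
      using avg_identity[of l "y n" "c n" "y n"] l unfolding cS' \<kappa>_def by simp
    have A1: "(1+l) * (norm (y (Suc n) - c (Suc n)))\<^sup>2 \<le> (1+l) * ((infdist (c (Suc n)) F)\<^sup>2 + eps (Suc n))"
      using P1[of "Suc n"] l by (intro mult_left_mono) (auto simp: dist_norm)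
    have "infdist (c (Suc n)) F \<le> norm (y n - c (Suc n))"
      using P1[of n] infdist_le[of "y n" F "c (Suc n)"] by (simp add: dist_norm norm_minus_commute)
    then have "(infdist (c (Suc n)) F)\<^sup>2 \<le> (norm (y n - c (Suc n)))\<^sup>2"
      by (simp add: power_mono infdist_nonneg)
    then have A2: "(1+l) * (infdist (c (Suc n)) F)\<^sup>2 \<le> (1+l) * (norm (y n - c (Suc n)))\<^sup>2"
      using l by (intro mult_left_mono) auto
    have A3: "(norm (y n - c n))\<^sup>2 \<le> (infdist (c n) F)\<^sup>2 + eps n" using P1[of n] by (simp add: dist_norm)
    have "infdist (c n) F \<le> norm (y (Suc n) - c n)"
      using P1[of "Suc n"] infdist_le[of "y (Suc n)" F "c n"] by (simp add: dist_norm norm_minus_commute)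
    then have A4: "(infdist (c n) F)\<^sup>2 \<le> (norm (y (Suc n) - c n))\<^sup>2"
      by (simp add: power_mono infdist_nonneg)
    have A5: "(1+l) * eps (Suc n) \<le> eps n"
    proof -
      have "(1+l) * eps (Suc n) \<le> 2 * eps (Suc n)" using l eps0[of "Suc n"] by (intro mult_right_mono) auto
      also have "\<dots> \<le> eps n" using eps0[of n] by (simp add: eps_def)
      finally show ?thesis .
    qed
    have "l * (norm (y (Suc n) - y n))\<^sup>2 \<le> 2 * eps n"
    proof -
      have "(1+l) * ((infdist (c (Suc n)) F)\<^sup>2 + eps (Suc n)) = (1+l) * (infdist (c (Suc n)) F)\<^sup>2 + (1+l) * eps (Suc n)"
        by (simp add: distrib_left)
      then show ?thesis using I1 I2 A1 A2 A3 A4 A5 by linarith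
    qed
    also have "2 * eps n = l * (2 * (1/4)^n)"
    proof -
      have "(1/2::real)^n * (1/4)^n = (1/2 * (1/4))^n" by (rule power_mult_distrib[symmetric])
      then have "(1/8::real)^n = (1/2)^n * (1/4)^n" by simp
      then show ?thesis by (simp add: eps_def l_def lam_def)
    qed
    finally have "(norm (y (Suc n) - y n))\<^sup>2 \<le> 2 * (1/4)^n" using l by simp
    also have "\<dots> \<le> (2 * (1/2)^n)\<^sup>2"
    proof -
      have "((1/2::real)^n)\<^sup>2 = (1/2 * (1/2))^n" unfolding power2_eq_square by (rule power_mult_distrib[symmetric])
      then have "((1/2::real)^n)\<^sup>2 = (1/4)^n" by simp
      moreover have "(2 * (1/2::real)^n)\<^sup>2 = 4 * ((1/2::real)^n)\<^sup>2" by (simp add: power2_eq_square)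
      moreover have "(0::real) \<le> (1/4)^n" by simp
      ultimately show ?thesis by linarith
    qed
    finally have "norm (y (Suc n) - y n) \<le> 2 * (1/2)^n"
      by (rule power2_le_imp_le) simp
    then show ?thesis by (simp add: dist_norm)
  qed
  have cc: "Cauchy c" and cb: "\<And>n. dist (c n) (c 0) \<le> 2 * (a * R)"
    using geo_cauchy2[of c "a * R", OF P5] by auto
  have yc: "Cauchy y" using geo_cauchy2[of y 2, OF P6] by auto
  obtain W where W: "c \<longlonglongrightarrow> W" using cc Cauchy_convergent_iff convergent_def by blast
  obtain Y where Y: "y \<longlonglongrightarrow> Y" using yc Cauchy_convergent_iff convergent_def by blast
  have YF: "Y \<in> F" using closed_sequentially[OF cl _ Y] P1 by blast
  have epsl: "eps \<longlonglongrightarrow> 0"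
    unfolding eps_def by (intro tendsto_mult_right_zero LIMSEQ_realpow_zero) auto
  have t1: "(\<lambda>n. (dist (y n) (c n))\<^sup>2) \<longlonglongrightarrow> (dist Y W)\<^sup>2" by (intro tendsto_intros Y W)
  have t2: "(\<lambda>n. (infdist (c n) F)\<^sup>2 + eps n) \<longlonglongrightarrow> (infdist W F)\<^sup>2 + 0" by (intro tendsto_intros W epsl)
  have ev: "\<forall>n. (dist (y n) (c n))\<^sup>2 \<le> (infdist (c n) F)\<^sup>2 + eps n" using P1 by simp
  have "(dist Y W)\<^sup>2 \<le> (infdist W F)\<^sup>2 + 0"
    by (rule tendsto_le[OF sequentially_bot t2 t1 always_eventually[OF ev]])
  then have "(dist Y W)\<^sup>2 \<le> (infdist W F)\<^sup>2" by simp
  then have "dist Y W \<le> infdist W F" by (rule power2_le_imp_le) (simp add: infdist_nonneg)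
  moreover have "infdist W F \<le> dist Y W" using infdist_le[OF YF, of W] by (simp add: dist_commute)
  ultimately have eq: "dist Y W = infdist W F" by simp
  have t3: "(\<lambda>n. dist (c n) v) \<longlonglongrightarrow> dist W v" by (intro tendsto_intros W)
  have "dist W v \<le> 2 * (a * R)"
  proof -
    have "\<forall>n. dist (c n) v \<le> 2 * (a * R)" using cb c0 by metis
    then show ?thesis by (rule tendsto_upperbound[OF t3 always_eventually]) simp
  qed
  also have "\<dots> < e" using a R e by linarith
  finally show ?thesis using eq YF by blast
qed



lemma res_fin: fixes m n :: nat shows "finite ({0} \<union> (\<lambda>i. h i p x) ` {1..m} \<union> (\<lambda>i. \<bar>h i p x\<bar>) ` {m+1..n})"
  by simp

lemma res_nonneg: "0 \<le> residual h m n p x"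
  unfolding residual_def by (rule Max_ge[OF res_fin]) simp

lemma res_ge_I: "i \<in> {1..m} \<Longrightarrow> h i p x \<le> residual h m n p x"
  unfolding residual_def by (rule Max_ge[OF res_fin]) simp

lemma res_ge_I0: "i \<in> {m+1..n} \<Longrightarrow> \<bar>h i p x\<bar> \<le> residual h m n p x"
  unfolding residual_def by (rule Max_ge[OF res_fin]) simp

lemma res_le:
  assumes "0 \<le> T" "\<And>i. i \<in> {1..m} \<Longrightarrow> h i p x \<le> T" "\<And>i. i \<in> {m+1..n} \<Longrightarrow> \<bar>h i p x\<bar> \<le> T"
  shows "residual h m n p x \<le> T"
  unfolding residual_def using assms by (subst Max_le_iff[OF res_fin]) auto

lemma res_zero: "x \<in> feas_map h m n p \<Longrightarrow> residual h m n p x = 0"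
  using res_nonneg[of h m n p x] res_le[of 0 m h p x n] by (auto simp: feas_map_def)

lemma norm_expand_le:
  fixes a d :: "'a::real_inner"
  assumes a: "a \<noteq> 0"
  shows "norm (a + t *\<^sub>R d) \<le> norm a + t * (((1/norm a) *\<^sub>R a) \<bullet> d) + t\<^sup>2 * (norm d)\<^sup>2 / (2 * norm a)"
proof -
  define na where "na = norm a"
  have na: "na > 0" using a by (simp add: na_def)
  define N where "N = norm (a + t *\<^sub>R d)"
  have e: "N\<^sup>2 = na\<^sup>2 + 2 * t * (a \<bullet> d) + t\<^sup>2 * (norm d)\<^sup>2"
    unfolding N_def na_def power2_norm_eq_inner
    by (simp add: inner_add_left inner_add_right inner_commute[of d a] power2_eq_square algebra_simps)
  define s where "s = t * (a \<bullet> d) / na + t\<^sup>2 * (norm d)\<^sup>2 / (2 * na)"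
  have rs: "norm a + t * (((1/norm a) *\<^sub>R a) \<bullet> d) + t\<^sup>2 * (norm d)\<^sup>2 / (2 * norm a) = na + s"
    by (simp add: s_def na_def)
  have s2: "2 * na * s = 2 * t * (a \<bullet> d) + t\<^sup>2 * (norm d)\<^sup>2"
    using na by (simp add: s_def field_simps)
  have sq: "(na + s)\<^sup>2 = N\<^sup>2 + s\<^sup>2"
  proof -
    have "(na + s)\<^sup>2 = na\<^sup>2 + 2 * na * s + s\<^sup>2" by (simp add: power2_eq_square algebra_simps)
    then show ?thesis using e s2 by linarith
  qed
  have "2 * na * (na + s) = na\<^sup>2 + N\<^sup>2" using e s2 by (simp add: power2_eq_square algebra_simps)
  moreover have "na\<^sup>2 + N\<^sup>2 \<ge> 0" by simp
  ultimately have "2 * na * (na + s) \<ge> 0" by simp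
  then have nn: "na + s \<ge> 0" using na by (simp add: zero_le_mult_iff)
  have "N\<^sup>2 \<le> (na + s)\<^sup>2" using sq by simp
  then have "N \<le> na + s" by (rule power2_le_imp_le) (rule nn)
  then show ?thesis unfolding rs N_def .
qed



lemma near_ball:
  fixes x :: "'a::metric_space"
  assumes "eventually P (at x)" "P x"
  obtains r where "r > 0" "\<And>z. dist z x < r \<Longrightarrow> P z"
proof -
  obtain r where r: "r > 0" "\<And>z. z \<noteq> x \<Longrightarrow> dist z x < r \<Longrightarrow> P z"
    using assms(1) unfolding eventually_at by auto
  show ?thesis using r assms(2) that[of r] by metis
qed

lemma no_descent:
  fixes h :: "nat \<Rightarrow> 'g \<Rightarrow> 'h::real_inner \<Rightarrow> real" and gradx :: "nat \<Rightarrow> 'g \<Rightarrow> 'h \<Rightarrow> 'h"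
  assumes mn: "m \<le> n"
    and grad: "\<And>i x. i \<in> {1..n} \<Longrightarrow> (h i p has_derivative (\<lambda>u. gradx i p x \<bullet> u)) (at x)"
    and gc: "\<And>i. i \<in> {1..n} \<Longrightarrow> isCont (gradx i p) x"
    and xF: "x \<in> feas_map h m n p" and xv: "x \<noteq> v" and M: "M > 0"
    and rho: "\<rho> > 0"
    and loc: "\<And>y. y \<in> ball x \<rho> \<Longrightarrow> norm (x - v) \<le> norm (y - v) + M * residual h m n p y"
    and c: "c > 0" and s: "s \<ge> 0"
    and hact: "\<And>i. i \<in> {1..m} \<Longrightarrow> h i p x = 0 \<Longrightarrow> gradx i p x \<bullet> d \<le> s"
    and heq: "\<And>i. i \<in> {m+1..n} \<Longrightarrow> \<bar>gradx i p x \<bullet> d\<bar> \<le> s"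
    and gd: "((1/norm (x - v)) *\<^sub>R (x - v)) \<bullet> d + M * s \<le> -c"
  shows False
proof -
  define g where "g = (1/norm (x - v)) *\<^sub>R (x - v)"
  define B where "B = c / (2 * M * (norm d + 1))"
  have nd: "0 < norm d + 1" using norm_ge_zero[of d] by linarith
  have B: "B > 0" unfolding B_def using c M nd by (intro divide_pos_pos mult_pos_pos) auto
  have MB: "M * norm d * B \<le> c / 2"
  proof -
    have "M * B = c / (2 * (norm d + 1))" using M by (simp add: B_def)
    have k: "((norm d + 1) - 1) * (c / (2 * (norm d + 1))) = c / 2 - c / (2 * (norm d + 1))"
      using nd by (simp add: field_simps)
    have "M * norm d * B = norm d * (M * B)" by (simp add: mult_ac)
    then have "M * norm d * B = c / 2 - c / (2 * (norm d + 1))"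
      using k \<open>M * B = _\<close> by simp
    moreover have "c / (2 * (norm d + 1)) > 0" using c nd by (intro divide_pos_pos) auto
    ultimately show ?thesis by linarith
  qed
  have xF': "\<And>i. i \<in> {1..m} \<Longrightarrow> h i p x \<le> 0" "\<And>i. i \<in> {m+1..n} \<Longrightarrow> h i p x = 0"
    using xF by (auto simp: feas_map_def)
  define P where "P z = (\<forall>i\<in>{1..n}. norm (gradx i p z - gradx i p x) < B \<and> (h i p x < 0 \<longrightarrow> h i p z < 0))" for z
  have evi: "eventually (\<lambda>z. norm (gradx i p z - gradx i p x) < B \<and> (h i p x < 0 \<longrightarrow> h i p z < 0)) (at x)"
    if i: "i \<in> {1..n}" for i
  proof -
    have e1: "eventually (\<lambda>z. dist (gradx i p z) (gradx i p x) < B) (at x)"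
      using gc[OF i] B unfolding isCont_def by (rule tendstoD)
    have hc: "isCont (h i p) x"
      using has_derivative_continuous[OF grad[OF i]] by simp
    have e2: "eventually (\<lambda>z. h i p x < 0 \<longrightarrow> h i p z < 0) (at x)"
    proof (cases "h i p x < 0")
      case True
      have "eventually (\<lambda>z. h i p z < 0) (at x)"
        using hc True unfolding isCont_def by (rule order_tendstoD(2))
      then show ?thesis by (rule eventually_mono) simp
    qed simp
    show ?thesis using eventually_conj[OF e1 e2] by (simp add: dist_norm)
  qed
  have "eventually P (at x)"
    unfolding P_def by (rule eventually_ball_finite) (use evi in auto)
  moreover have "P x" using B by (simp add: P_def)
  ultimately obtain r1 where r1: "r1 > 0" "\<And>z. dist z x < r1 \<Longrightarrow> P z" by (rule near_ball) blast
  define r0 where "r0 = min \<rho> r1"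
  have r0: "r0 > 0" "r0 \<le> \<rho>" "r0 \<le> r1" using rho r1 by (auto simp: r0_def)
  have nxv: "norm (x - v) > 0" using xv by simp
  define \<beta> where "\<beta> = (norm d)\<^sup>2 / (2 * norm (x - v))"
  have \<beta>: "\<beta> \<ge> 0" by (simp add: \<beta>_def)
  define t where "t = min (r0 / (2 * (norm d + 1))) (c / (4 * (\<beta> + 1)))"
  have t1: "r0 / (2 * (norm d + 1)) > 0" using r0 nd by (intro divide_pos_pos) auto
  have t2: "c / (4 * (\<beta> + 1)) > 0" using c \<beta> by (intro divide_pos_pos) auto
  have t: "t > 0" unfolding t_def using t1 t2 by simp
  have td: "t * norm d < r0"
  proof -
    have "t \<le> r0 / (2 * (norm d + 1))" by (simp add: t_def)
    moreover have "0 < 2 * (norm d + 1)" using nd by simp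
    ultimately have "t * (2 * (norm d + 1)) \<le> r0" by (simp add: pos_le_divide_eq)
    then show ?thesis using t r0 by (simp add: algebra_simps)
  qed
  have tb: "t * \<beta> \<le> c / 4"
  proof -
    have "t \<le> c / (4 * (\<beta> + 1))" by (simp add: t_def)
    moreover have "0 < 4 * (\<beta> + 1)" using \<beta> by simp
    ultimately have "t * (4 * (\<beta> + 1)) \<le> c" by (simp add: pos_le_divide_eq)
    then show ?thesis using t by (simp add: algebra_simps)
  qed
  define y where "y = x + t *\<^sub>R d"
  have yx: "y - x = t *\<^sub>R d" by (simp add: y_def)
  have nyx: "norm (y - x) = t * norm d" using t by (simp add: yx)
  have seg: "dist (x + \<tau> *\<^sub>R (y - x)) x < r1" if "\<tau> \<in> {0..1}" for \<tau>
  proof -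
    have "dist (x + \<tau> *\<^sub>R (y - x)) x = \<tau> * (t * norm d)" using that t by (simp add: dist_norm yx)
    also have "\<dots> \<le> t * norm d" using that t by (simp add: mult_left_le_one_le)
    finally show ?thesis using td r0 by linarith
  qed
  have lin: "\<bar>h i p y - h i p x - t * (gradx i p x \<bullet> d)\<bar> \<le> t * norm d * B" if i: "i \<in> {1..n}" for i
  proof -
    have "\<bar>h i p y - h i p x - gradx i p x \<bullet> (y - x)\<bar> \<le> norm (y - x) * B"
    proof (rule lin_bound)
      show "(h i p has_derivative (\<lambda>u. gradx i p z \<bullet> u)) (at z)" for z by (rule grad[OF i])
      show "norm (gradx i p (x + \<tau> *\<^sub>R (y - x)) - gradx i p x) \<le> B" if "\<tau> \<in> {0..1}" for \<tau>
        using r1(2)[OF seg[OF that]] i by (auto simp: P_def less_imp_le)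
    qed
    then show ?thesis using t by (simp add: nyx yx)
  qed
  define T where "T = t * (s + norm d * B)"
  have T: "T \<ge> 0" using t s B by (simp add: T_def)
  have res: "residual h m n p y \<le> T"
  proof (rule res_le[OF T])
    fix i assume i: "i \<in> {1..m}"
    then have i': "i \<in> {1..n}" using mn by auto
    show "h i p y \<le> T"
    proof (cases "h i p x = 0")
      case True
      have "t * (gradx i p x \<bullet> d) \<le> t * s" using hact[OF i True] t by (simp add: mult_left_mono)
      then show ?thesis using lin[OF i'] True by (simp add: T_def algebra_simps abs_le_iff)
    next
      case False
      then have "h i p x < 0" using xF'(1)[OF i] by simp
      moreover have "dist y x < r1" using nyx td r0 by (simp add: dist_norm)
      ultimately have "h i p y < 0" using r1(2) i' by (auto simp: P_def)
      then show ?thesis using T by simp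
    qed
  next
    fix i assume i: "i \<in> {m+1..n}"
    then have i': "i \<in> {1..n}" by auto
    have "\<bar>t * (gradx i p x \<bullet> d)\<bar> \<le> t * s" using heq[OF i] t by (simp add: abs_mult)
    then show "\<bar>h i p y\<bar> \<le> T" using lin[OF i'] xF'(2)[OF i] by (simp add: T_def algebra_simps abs_le_iff)
  qed
  have yb: "y \<in> ball x \<rho>" using nyx td r0 by (simp add: dist_norm norm_minus_commute)
  have ny: "norm (y - v) \<le> norm (x - v) + t * (g \<bullet> d) + t * (t * \<beta>)"
  proof -
    have yv: "y - v = (x - v) + t *\<^sub>R d" by (simp add: y_def)
    have "norm (y - v) \<le> norm (x - v) + t * (g \<bullet> d) + t\<^sup>2 * (norm d)\<^sup>2 / (2 * norm (x - v))"
      unfolding yv g_def using norm_expand_le[of "x - v" t d] xv by simp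
    also have "t\<^sup>2 * (norm d)\<^sup>2 / (2 * norm (x - v)) = t * (t * \<beta>)"
      by (simp add: \<beta>_def power2_eq_square)
    finally show ?thesis .
  qed
  have "norm (x - v) \<le> norm (y - v) + M * residual h m n p y" by (rule loc[OF yb])
  moreover have "M * residual h m n p y \<le> M * T" using res M by simp
  ultimately have A: "0 \<le> t * (g \<bullet> d) + t * (t * \<beta>) + M * T" using ny by linarith
  have MT: "M * T = t * (M * s) + t * (M * norm d * B)" by (simp add: T_def algebra_simps)
  have Q: "g \<bullet> d + t * \<beta> + M * s + M * norm d * B < 0"
    using gd MB tb c unfolding g_def by linarith
  then have "t * (g \<bullet> d + t * \<beta> + M * s + M * norm d * B) < 0" using t by (simp add: mult_pos_neg)
  then show False using A MT by (simp add: algebra_simps)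
qed



lemma sum_delta_scaleR:
  fixes G :: "nat \<Rightarrow> 'a::real_vector"
  assumes "i \<in> S" "finite S"
  shows "(\<Sum>j\<in>S. (if j = i then a else 0) *\<^sub>R G j) = a *\<^sub>R G i"
proof -
  have e: "(\<lambda>j. (if j = i then a else 0) *\<^sub>R G j) = (\<lambda>j. if j = i then a *\<^sub>R G j else 0)" by auto
  show ?thesis unfolding e using assms by (simp add: sum.delta)
qed

lemma var_ineq:
  fixes w k ks :: "'a::real_inner"
  assumes K: "convex K" "k \<in> K" "ks \<in> K" and M: "M > 0"
    and min: "\<And>k. k \<in> K \<Longrightarrow> norm (g + M *\<^sub>R ks) \<le> norm (g + M *\<^sub>R k)"
    and w: "w = g + M *\<^sub>R ks"
  shows "0 \<le> w \<bullet> (k - ks)"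
proof (rule ccontr)
  assume "\<not> 0 \<le> w \<bullet> (k - ks)"
  then have neg: "w \<bullet> (k - ks) < 0" by simp
  define u where "u = M *\<^sub>R (k - ks)"
  define a where "a = w \<bullet> u"
  define b where "b = u \<bullet> u"
  have a: "a < 0" using neg M by (simp add: a_def u_def mult_pos_neg)
  have b: "b \<ge> 0" by (simp add: b_def)
  have key: "0 \<le> 2 * a + \<tau> * b" if \<tau>: "0 < \<tau>" "\<tau> \<le> 1" for \<tau>
  proof -
    have "(1 - \<tau>) *\<^sub>R ks + \<tau> *\<^sub>R k \<in> K"
      using K \<tau> by (intro convexD) auto
    then have "norm w \<le> norm (g + M *\<^sub>R ((1 - \<tau>) *\<^sub>R ks + \<tau> *\<^sub>R k))" using min w by simp
    also have "g + M *\<^sub>R ((1 - \<tau>) *\<^sub>R ks + \<tau> *\<^sub>R k) = w + \<tau> *\<^sub>R u"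
      by (simp add: w u_def algebra_simps)
    finally have "(norm w)\<^sup>2 \<le> (norm (w + \<tau> *\<^sub>R u))\<^sup>2" by (simp add: power_mono)
    also have "(norm (w + \<tau> *\<^sub>R u))\<^sup>2 = w \<bullet> w + \<tau> * (2 * a + \<tau> * b)"
      unfolding power2_norm_eq_inner a_def b_def
      by (simp add: inner_add_left inner_add_right inner_commute[of u w] algebra_simps)
    finally have "0 \<le> \<tau> * (2 * a + \<tau> * b)" by (simp add: power2_norm_eq_inner)
    then show ?thesis using \<tau> by (simp add: zero_le_mult_iff)
  qed
  define na where "na = - a"
  have na: "na > 0" using a by (simp add: na_def)
  define \<tau> where "\<tau> = min 1 (na / (b + 1))"
  have t0: "na / (b + 1) > 0" using na b by (intro divide_pos_pos) auto
  have \<tau>: "0 < \<tau>" "\<tau> \<le> 1" using t0 by (auto simp: \<tau>_def)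
  have "\<tau> * b \<le> - a"
  proof -
    have "\<tau> \<le> na / (b + 1)" by (simp add: \<tau>_def)
    moreover have "0 < b + 1" using b by simp
    ultimately have "\<tau> * (b + 1) \<le> na" by (simp add: pos_le_divide_eq)
    then show ?thesis using \<tau> by (simp add: algebra_simps na_def)
  qed
  then show False using key[OF \<tau>] a by linarith
qed



lemma kkt:
  fixes h :: "nat \<Rightarrow> 'g \<Rightarrow> 'h::real_inner \<Rightarrow> real" and gradx :: "nat \<Rightarrow> 'g \<Rightarrow> 'h \<Rightarrow> 'h"
  assumes mn: "m \<le> n"
    and grad: "\<And>i x. i \<in> {1..n} \<Longrightarrow> (h i p has_derivative (\<lambda>u. gradx i p x \<bullet> u)) (at x)"
    and gc: "\<And>i. i \<in> {1..n} \<Longrightarrow> isCont (gradx i p) x"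
    and xF: "x \<in> feas_map h m n p" and xv: "x \<noteq> v" and M: "M > 0"
    and rho: "\<rho> > 0"
    and loc: "\<And>y. y \<in> ball x \<rho> \<Longrightarrow> norm (x - v) \<le> norm (y - v) + M * residual h m n p y"
  shows "LagrM M h gradx m n v p x \<noteq> {}"
proof -
  define g where "g = (1/norm (x - v)) *\<^sub>R (x - v)"
  define G where "G i = gradx i p x" for i
  define act where "act = {i \<in> {1..m}. h i p x = 0}"
  define C where "C = {lam :: nat \<Rightarrow> real. (\<forall>i. i \<notin> {1..n} \<longrightarrow> lam i = 0) \<and>
      (\<forall>i\<in>{1..m}. 0 \<le> lam i \<and> lam i * h i p x = 0) \<and> (\<Sum>i=1..n. \<bar>lam i\<bar>) \<le> 1}"
  have Cs: "0 \<le> lam i" "lam i * h i p x = 0" if "lam \<in> C" "i \<in> {1..m}" for lam i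
    using that unfolding C_def by blast+
  have Cb: "(\<Sum>i=1..n. \<bar>lam i\<bar>) \<le> 1" if "lam \<in> C" for lam
    using that unfolding C_def by blast
  define L where "L lam = (\<Sum>i=1..n. lam i *\<^sub>R G i)" for lam :: "nat \<Rightarrow> real"
  define K where "K = L ` C"
  define Q where "Q = insert 0 (G ` act \<union> G ` {m+1..n} \<union> (\<lambda>i. - G i) ` {m+1..n})"
  have finQ: "finite Q" by (simp add: Q_def act_def)
  have act_sub: "act \<subseteq> {1..n}" using mn by (auto simp: act_def)
  have eC: "(\<lambda>j. if j = i then a else 0) \<in> C"
    if "i \<in> {1..n}" "\<bar>a\<bar> \<le> 1" "i \<in> {1..m} \<Longrightarrow> 0 \<le> a \<and> h i p x = 0" for i a
  proof -
    have "(\<Sum>j=1..n. \<bar>if j = i then a else 0\<bar>) = (\<Sum>j=1..n. if j = i then \<bar>a\<bar> else 0)"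
      by (rule sum.cong) auto
    also have "\<dots> = \<bar>a\<bar>" using that(1) by (simp add: sum.delta)
    finally show ?thesis using that by (auto simp: C_def)
  qed
  have eL: "L (\<lambda>j. if j = i then a else 0) = a *\<^sub>R G i" if "i \<in> {1..n}" for i a
    unfolding L_def using that by (simp add: sum_delta_scaleR)
  have QK: "Q \<subseteq> K"
  proof
    fix q assume q: "q \<in> Q"
    have z: "0 \<in> K"
    proof -
      have "(\<lambda>_. 0) \<in> C" by (simp add: C_def)
      then have "L (\<lambda>_. 0) \<in> K" unfolding K_def by (rule imageI)
      then show ?thesis by (simp add: L_def)
    qed
    have p: "G i \<in> K" if "i \<in> {1..n}" "i \<in> {1..m} \<Longrightarrow> h i p x = 0" for i
    proof -
      have "(\<lambda>j. if j = i then 1 else 0) \<in> C" using that by (intro eC) auto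
      then have "L (\<lambda>j. if j = i then 1 else 0) \<in> K" unfolding K_def by (rule imageI)
      then show ?thesis using eL[OF that(1), of 1] by simp
    qed
    have mneg: "- G i \<in> K" if "i \<in> {m+1..n}" for i
    proof -
      have i: "i \<in> {1..n}" using that mn by auto
      have "(\<lambda>j. if j = i then -1 else 0) \<in> C" using that i by (intro eC) auto
      then have "L (\<lambda>j. if j = i then -1 else 0) \<in> K" unfolding K_def by (rule imageI)
      then show ?thesis using eL[OF i, of "-1"] by simp
    qed
    show "q \<in> K"
    proof -
      have "q = 0 \<or> (\<exists>i\<in>act. q = G i) \<or> (\<exists>i\<in>{m+1..n}. q = G i) \<or> (\<exists>i\<in>{m+1..n}. q = - G i)"
        using q unfolding Q_def by auto
      then show ?thesis
      proof (elim disjE bexE)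
        assume "q = 0" then show ?thesis using z by simp
      next
        fix i assume "i \<in> act" "q = G i"
        then show ?thesis using p[of i] act_sub by (auto simp: act_def)
      next
        fix i assume "i \<in> {m+1..n}" "q = G i"
        then show ?thesis using p[of i] by auto
      next
        fix i assume "i \<in> {m+1..n}" "q = - G i"
        then show ?thesis using mneg[of i] by auto
      qed
    qed
  qed
  have convK: "convex K"
  proof (rule convexI)
    fix k1 k2 u v :: real
    fix k1 k2 assume k1: "k1 \<in> K" and k2: "k2 \<in> K"
    fix u v :: real assume uv: "0 \<le> u" "0 \<le> v" "u + v = 1"
    obtain l1 where l1: "l1 \<in> C" "k1 = L l1" using k1 unfolding K_def by blast
    obtain l2 where l2: "l2 \<in> C" "k2 = L l2" using k2 unfolding K_def by blast
    define l where "l i = u * l1 i + v * l2 i" for i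
    have "L l = u *\<^sub>R L l1 + v *\<^sub>R L l2"
      unfolding L_def l_def by (simp add: scaleR_add_left sum.distrib scaleR_sum_right)
    moreover have "l \<in> C"
    proof -
      have "(\<Sum>i=1..n. \<bar>l i\<bar>) \<le> (\<Sum>i=1..n. u * \<bar>l1 i\<bar> + v * \<bar>l2 i\<bar>)"
      proof (rule sum_mono)
        fix i
        have "\<bar>l i\<bar> \<le> \<bar>u * l1 i\<bar> + \<bar>v * l2 i\<bar>" unfolding l_def by (rule abs_triangle_ineq)
        then show "\<bar>l i\<bar> \<le> u * \<bar>l1 i\<bar> + v * \<bar>l2 i\<bar>" using uv by (simp add: abs_mult)
      qed
      also have "\<dots> = u * (\<Sum>i=1..n. \<bar>l1 i\<bar>) + v * (\<Sum>i=1..n. \<bar>l2 i\<bar>)"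
        by (simp add: sum.distrib sum_distrib_left)
      also have "\<dots> \<le> u * 1 + v * 1"
        using l1(1) l2(1) uv unfolding C_def by (intro add_mono mult_left_mono) auto
      finally have "(\<Sum>i=1..n. \<bar>l i\<bar>) \<le> 1" using uv by simp
      moreover have "\<forall>i. i \<notin> {1..n} \<longrightarrow> l i = 0" using l1(1) l2(1) by (simp add: C_def l_def)
      moreover have "\<forall>i\<in>{1..m}. 0 \<le> l i \<and> l i * h i p x = 0"
      proof
        fix i assume i: "i \<in> {1..m}"
        have a: "0 \<le> l1 i" "l1 i * h i p x = 0" using l1(1) i unfolding C_def by blast+
        have b: "0 \<le> l2 i" "l2 i * h i p x = 0" using l2(1) i unfolding C_def by blast+
        have "l i * h i p x = u * (l1 i * h i p x) + v * (l2 i * h i p x)" by (simp add: l_def algebra_simps)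
        then show "0 \<le> l i \<and> l i * h i p x = 0" using a b uv by (simp add: l_def)
      qed
      ultimately show ?thesis unfolding C_def by blast
    qed
    ultimately show "u *\<^sub>R k1 + v *\<^sub>R k2 \<in> K" using l1 l2 unfolding K_def by (metis image_eqI)
  qed
  have KQ: "K \<subseteq> convex hull Q"
  proof
    fix k assume "k \<in> K"
    then obtain lam where lam: "lam \<in> C" "k = L lam" unfolding K_def by blast
    define S where "S = (\<Sum>i=1..n. \<bar>lam i\<bar>)"
    have S: "0 \<le> S" "S \<le> 1" using lam(1) by (auto simp: S_def C_def intro: sum_nonneg)
    define q where "q i = (if 0 < lam i then G i else if lam i < 0 then - G i else 0)" for i
    have qQ: "q i \<in> Q" if i: "i \<in> {1..n}" for i
    proof (cases "0 < lam i")
      case True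
      show ?thesis
      proof (cases "i \<le> m")
        case True
        then have "i \<in> {1..m}" using i by auto
        then have "h i p x = 0" using Cs(2)[OF lam(1) \<open>i \<in> {1..m}\<close>] \<open>0 < lam i\<close> by simp
        then show ?thesis using \<open>i \<in> {1..m}\<close> \<open>0 < lam i\<close> by (auto simp: q_def Q_def act_def)
      next
        case False
        then show ?thesis using i \<open>0 < lam i\<close> by (auto simp: q_def Q_def)
      qed
    next
      case False
      show ?thesis
      proof (cases "lam i < 0")
        case True
        then have "i \<notin> {1..m}" using Cs(1)[OF lam(1)] by force
        then show ?thesis using i True False by (auto simp: q_def Q_def)
      qed (use False in \<open>auto simp: q_def Q_def\<close>)
    qed
    have lq: "\<bar>lam i\<bar> *\<^sub>R q i = lam i *\<^sub>R G i" for i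
      by (auto simp: q_def)
    have kq: "k = (\<Sum>i=1..n. \<bar>lam i\<bar> *\<^sub>R q i)" unfolding lam(2) L_def lq ..
    have hQ: "Q \<subseteq> convex hull Q" by (rule hull_subset)
    have z: "0 \<in> convex hull Q" using hQ by (auto simp: Q_def)
    show "k \<in> convex hull Q"
    proof (cases "S = 0")
      case True
      then have "\<forall>i\<in>{1..n}. lam i = 0" unfolding S_def by (subst (asm) sum_nonneg_eq_0_iff) auto
      then have "k = 0" unfolding kq by simp
      then show ?thesis using z by simp
    next
      case False
      then have Sp: "S > 0" using S by simp
      have zz: "(\<Sum>i=1..n. (\<bar>lam i\<bar> / S) *\<^sub>R q i) \<in> convex hull Q"
      proof (rule convex_sum)
        show "(\<Sum>i=1..n. \<bar>lam i\<bar> / S) = 1" using Sp by (simp add: S_def sum_divide_distrib[symmetric])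
      qed (use qQ hQ Sp in \<open>auto\<close>)
      have "k = S *\<^sub>R (\<Sum>i=1..n. (\<bar>lam i\<bar> / S) *\<^sub>R q i) + (1 - S) *\<^sub>R 0"
        using Sp unfolding kq by (simp add: scaleR_sum_right)
      also have "\<dots> \<in> convex hull Q"
        using S zz z by (intro convexD) auto
      finally show ?thesis .
    qed
  qed
  have KQ2: "K = convex hull Q"
    using KQ hull_minimal[of Q K convex, OF QK convK] by blast
  have compK: "compact K" unfolding KQ2 by (rule finite_imp_compact_convex_hull[OF finQ])
  have Kne: "K \<noteq> {}" using QK by (auto simp: Q_def)
  have "continuous_on K (\<lambda>k. norm (g + M *\<^sub>R k))" by (intro continuous_intros)
  then obtain ks where ks: "ks \<in> K" "\<And>k. k \<in> K \<Longrightarrow> norm (g + M *\<^sub>R ks) \<le> norm (g + M *\<^sub>R k)"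
    using continuous_attains_inf[OF compK Kne] by blast
  obtain ls where ls: "ls \<in> C" "ks = L ls" using ks(1) unfolding K_def by blast
  define w where "w = g + M *\<^sub>R ks"
  show ?thesis
  proof (cases "w = 0")
    case True
    define mu where "mu i = M * ls i" for i
    have "mu \<in> LagrM M h gradx m n v p x"
    proof -
      have "(\<Sum>i=1..n. mu i *\<^sub>R gradx i p x) = M *\<^sub>R ks"
        unfolding ls(2) L_def mu_def G_def by (simp add: scaleR_sum_right)
      then have e: "(1 / norm (x - v)) *\<^sub>R (x - v) + (\<Sum>i=1..n. mu i *\<^sub>R gradx i p x) = 0"
        using True by (simp add: w_def g_def)
      have s: "(\<Sum>i=1..n. \<bar>mu i\<bar>) \<le> M"
      proof -
        have "(\<Sum>i=1..n. \<bar>mu i\<bar>) = M * (\<Sum>i=1..n. \<bar>ls i\<bar>)"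
          using M by (simp add: mu_def abs_mult sum_distrib_left)
        also have "\<dots> \<le> M * 1" using ls(1) M unfolding C_def by (intro mult_left_mono) auto
        finally show ?thesis by simp
      qed
      show ?thesis using e s ls(1) M unfolding LagrM_def Lagr_def C_def mu_def by auto
    qed
    then show ?thesis by blast
  next
    case False
    have VI: "0 \<le> w \<bullet> (k - ks)" if "k \<in> K" for k
      by (rule var_ineq[OF convK that ks(1) M ks(2)]) (simp_all add: w_def)
    define d where "d = - w"
    define s where "s = - (ks \<bullet> w)"
    have qd: "q \<bullet> d \<le> s" if "q \<in> K" for q
      using VI[OF that] by (simp add: d_def s_def inner_diff_right inner_commute)
    have s0: "s \<ge> 0" using qd[of 0] QK by (auto simp: Q_def)
    have "False"
    proof (rule no_descent[where h=h and gradx=gradx and p=p and x=x and v=v and M=M and \<rho>=\<rho> and d=d and s=s and c="w \<bullet> w", OF mn grad gc xF xv M rho loc])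
      show "0 < w \<bullet> w" using False by simp
      show "0 \<le> s" by (rule s0)
      show "gradx i p x \<bullet> d \<le> s" if "i \<in> {1..m}" "h i p x = 0" for i
        using qd[of "G i"] QK that by (auto simp: Q_def act_def G_def)
      show "\<bar>gradx i p x \<bullet> d\<bar> \<le> s" if "i \<in> {m+1..n}" for i
      proof -
        have m1: "G i \<in> Q" "- G i \<in> Q" using that by (auto simp: Q_def)
        have "G i \<bullet> d \<le> s" using qd QK m1 by blast
        moreover have "(- G i) \<bullet> d \<le> s" using qd QK m1 by blast
        ultimately show ?thesis by (simp add: G_def abs_le_iff)
      qed
      have ww: "w \<bullet> w = g \<bullet> w + M * (ks \<bullet> w)"
        by (subst (1) w_def) (simp add: inner_add_left)
      have "g \<bullet> d = - (g \<bullet> w)" by (simp add: d_def)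
      moreover have "M * s = - (M * (ks \<bullet> w))" by (simp add: s_def)
      ultimately have "g \<bullet> d + M * s = - (w \<bullet> w)" using ww by linarith
      then show "((1/norm (x - v)) *\<^sub>R (x - v)) \<bullet> d + M * s \<le> - (w \<bullet> w)" by (simp add: g_def)
    qed (auto)
    then show ?thesis by simp
  qed
qed



lemma cont_slice:
  assumes "continuous_on UNIV (\<lambda>(p, x). f p x)"
  shows "isCont (f p) x"
proof -
  have "continuous_on UNIV ((\<lambda>(p, x). f p x) \<circ> (\<lambda>x. (p, x)))"
    by (rule continuous_on_compose) (auto intro!: continuous_intros intro: continuous_on_subset[OF assms])
  then have "continuous_on UNIV (f p)" by (simp add: o_def)
  then show ?thesis by (simp add: continuous_on_eq_continuous_at)
qed

lemma joint_near_fin: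
  fixes f :: "nat \<Rightarrow> 'g::metric_space \<Rightarrow> 'h::metric_space \<Rightarrow> 'b::metric_space"
  assumes I: "finite I" and c: "\<And>i. i \<in> I \<Longrightarrow> continuous_on UNIV (\<lambda>(p, x). f i p x)" and e: "e > 0"
  shows "\<exists>\<delta>>0. \<forall>i\<in>I. \<forall>p z. dist p pc < \<delta> \<longrightarrow> dist z xc < \<delta> \<longrightarrow> dist (f i p z) (f i pc xc) < e"
proof -
  define P where "P q = (\<forall>i\<in>I. dist ((\<lambda>(p, x). f i p x) q) (f i pc xc) < e)" for q
  have "eventually P (at (pc, xc))"
    unfolding P_def
  proof (rule eventually_ball_finite[OF I], rule ballI)
    fix i assume i: "i \<in> I"
    have "isCont (\<lambda>(p, x). f i p x) (pc, xc)"
      using c[OF i] by (simp add: continuous_on_eq_continuous_at)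
    then have "((\<lambda>(p, x). f i p x) \<longlongrightarrow> f i pc xc) (at (pc, xc))"
      by (simp add: isCont_def)
    then show "eventually (\<lambda>q. dist ((\<lambda>(p, x). f i p x) q) (f i pc xc) < e) (at (pc, xc))"
      using e by (rule tendstoD)
  qed
  moreover have "P (pc, xc)" using e by (simp add: P_def)
  ultimately obtain r where r: "r > 0" "\<And>q. dist q (pc, xc) < r \<Longrightarrow> P q"
    by (rule near_ball) blast
  show ?thesis
  proof (rule exI[of _ "r/2"], intro conjI ballI allI impI)
    show "r/2 > 0" using r by simp
    fix i p z assume i: "i \<in> I" and d: "dist p pc < r/2" "dist z xc < r/2"
    have "dist (p, z) (pc, xc) = sqrt ((dist p pc)\<^sup>2 + (dist z xc)\<^sup>2)" by (simp add: dist_Pair_Pair)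
    also have "\<dots> \<le> dist p pc + dist z xc" by (rule sqrt_sum_squares_le_sum) simp_all
    also have "\<dots> < r" using d by simp
    finally have "P (p, z)" by (rule r(2))
    then show "dist (f i p z) (f i pc xc) < e" using i by (simp add: P_def)
  qed
qed

lemma res_cont:
  fixes h :: "nat \<Rightarrow> 'g \<Rightarrow> 'h::metric_space \<Rightarrow> real"
  assumes mn: "m \<le> n" and c: "\<And>i. i \<in> {1..n} \<Longrightarrow> isCont (h i p) x" and eta: "\<eta> > 0"
  shows "\<exists>\<delta>>0. \<forall>w. dist w x < \<delta> \<longrightarrow> residual h m n p w \<le> residual h m n p x + \<eta>"
proof -
  define P where "P w = (\<forall>i\<in>{1..n}. dist (h i p w) (h i p x) < \<eta>)" for w
  have "eventually P (at x)"
    unfolding P_def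
  proof (rule eventually_ball_finite, simp, rule ballI)
    fix i assume i: "i \<in> {1..n}"
    show "eventually (\<lambda>w. dist (h i p w) (h i p x) < \<eta>) (at x)"
      using c[OF i] eta unfolding isCont_def by (rule tendstoD)
  qed
  moreover have "P x" using eta by (simp add: P_def)
  ultimately obtain r where r: "r > 0" "\<And>w. dist w x < r \<Longrightarrow> P w"
    by (rule near_ball) blast
  show ?thesis
  proof (rule exI[of _ r], intro conjI allI impI)
    show "r > 0" by (rule r(1))
    fix w assume "dist w x < r"
    then have Pw: "P w" by (rule r(2))
    show "residual h m n p w \<le> residual h m n p x + \<eta>"
    proof (rule res_le)
      show "0 \<le> residual h m n p x + \<eta>" using res_nonneg[of h m n p x] eta by simp
      fix i assume i: "i \<in> {1..m}"
      then have "i \<in> {1..n}" using mn by auto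
      then have "dist (h i p w) (h i p x) < \<eta>" using Pw by (simp add: P_def)
      then show "h i p w \<le> residual h m n p x + \<eta>" using res_ge_I[OF i, of h p x n]
        by (simp add: dist_real_def abs_less_iff)
    next
      fix i assume i: "i \<in> {m+1..n}"
      then have "i \<in> {1..n}" by auto
      then have "dist (h i p w) (h i p x) < \<eta>" using Pw by (simp add: P_def)
      then show "\<bar>h i p w\<bar> \<le> residual h m n p x + \<eta>" using res_ge_I0[OF i, of h p x]
        by (simp add: dist_real_def abs_less_iff abs_le_iff)
    qed
  qed
qed

lemma seq_lim:
  fixes f :: "nat \<Rightarrow> 'a::metric_space"
  assumes "\<And>k. dist (f k) l \<le> C / real (Suc k)"
  shows "f \<longlonglongrightarrow> l"
proof (rule metric_LIMSEQ_I)
  fix r :: real assume r: "r > 0"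
  have C: "C \<ge> 0" using assms[of 0] zero_le_dist[of "f 0" l] by linarith
  have q: "r / (C + 1) > 0" using r C by simp
  obtain N where N: "inverse (real (Suc N)) < r / (C + 1)"
    using reals_Archimedean[OF q] by blast
  have "dist (f n) l < r" if n: "n \<ge> N" for n
  proof -
    have "dist (f n) l \<le> C / real (Suc n)" by (rule assms)
    also have "\<dots> \<le> (C + 1) * inverse (real (Suc n))" using C by (simp add: divide_inverse)
    also have "\<dots> \<le> (C + 1) * inverse (real (Suc N))"
      using n C by (intro mult_left_mono le_imp_inverse_le) auto
    also have "\<dots> < (C + 1) * (r / (C + 1))" using N C by (intro mult_strict_left_mono) auto
    also have "\<dots> = r" using C by simp
    finally show ?thesis .
  qed
  then show "\<exists>no. \<forall>n\<ge>no. dist (f n) l < r" by blast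
qed



lemma dirA:
  fixes h :: "nat \<Rightarrow> 'g::real_normed_vector \<Rightarrow> 'h::{real_inner, complete_space} \<Rightarrow> real"
    and gradx :: "nat \<Rightarrow> 'g \<Rightarrow> 'h \<Rightarrow> 'h"
    and m n :: nat and p0 :: 'g and x0 :: 'h
  assumes mn: "m \<le> n"
    and grad: "\<And>i p x. i \<in> {1..n} \<Longrightarrow>
                 (h i p has_derivative (\<lambda>u. gradx i p x \<bullet> u)) (at x)"
    and cont_grad: "\<And>i. i \<in> {1..n} \<Longrightarrow> continuous_on UNIV (\<lambda>(p, x). gradx i p x)"
    and lsc: "lsc_rel (feas_map h m n) (dom_map (feas_map h m n)) p0 x0"
    and reg: "R_regular_rel h m n (dom_map (feas_map h m n)) p0 x0"
  shows "\<exists>M>0. \<forall>pk :: nat \<Rightarrow> 'g. \<forall>vk :: nat \<Rightarrow> 'h.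
        pk \<longlonglongrightarrow> p0 \<and> (\<forall>k. pk k \<in> dom_map (feas_map h m n)) \<and>
        vk \<longlonglongrightarrow> x0 \<and> (\<forall>k. vk k \<notin> feas_map h m n (pk k)) \<longrightarrow>
        (\<forall>\<^sub>F k in sequentially.
           \<forall>xk \<in> proj_set (feas_map h m n (pk k)) (vk k).
             LagrM M h gradx m n (vk k) (pk k) xk \<noteq> {})"
proof -
  define F where "F = feas_map h m n"
  define D where "D = dom_map F"
  obtain M U V where M: "M > 0" and U: "open U" "p0 \<in> U" and V: "open V" "x0 \<in> V"
    and bnd: "\<And>x p. x \<in> V \<Longrightarrow> p \<in> U \<inter> D \<Longrightarrow> infdist x (F p) \<le> M * residual h m n p x"
    using reg unfolding R_regular_rel_def F_def D_def by blast
  obtain r1 where r1: "r1 > 0" "ball p0 r1 \<subseteq> U" using U open_contains_ball by blast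
  obtain r2 where r2: "r2 > 0" "ball x0 r2 \<subseteq> V" using V open_contains_ball by blast
  obtain U' where U': "open U'" "p0 \<in> U'" "\<And>p. p \<in> U' \<inter> D \<Longrightarrow> F p \<inter> ball x0 (r2/8) \<noteq> {}"
    using lsc r2(1) unfolding lsc_rel_def F_def D_def by (metis centre_in_ball open_ball zero_less_divide_iff zero_less_numeral)
  show ?thesis
  proof (rule exI[of _ M], intro conjI allI impI)
    show "M > 0" by (rule M)
    fix pk :: "nat \<Rightarrow> 'g" and vk :: "nat \<Rightarrow> 'h"
    assume as: "pk \<longlonglongrightarrow> p0 \<and> (\<forall>k. pk k \<in> dom_map (feas_map h m n)) \<and>
        vk \<longlonglongrightarrow> x0 \<and> (\<forall>k. vk k \<notin> feas_map h m n (pk k))"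
    then have pk: "pk \<longlonglongrightarrow> p0" and pD: "\<And>k. pk k \<in> D" and vk: "vk \<longlonglongrightarrow> x0"
      and vF': "\<And>k. vk k \<notin> F (pk k)"
      by (auto simp: F_def D_def)
    have e1: "eventually (\<lambda>k. pk k \<in> ball p0 r1) sequentially"
      using pk open_ball centre_in_ball[THEN iffD2, OF r1(1)] by (rule topological_tendstoD)
    have e2: "eventually (\<lambda>k. pk k \<in> U') sequentially"
      using pk U'(1,2) by (rule topological_tendstoD)
    have e3: "eventually (\<lambda>k. dist (vk k) x0 < r2/8) sequentially"
      using vk r2(1) by (intro tendstoD) auto
    show "\<forall>\<^sub>F k in sequentially. \<forall>xk \<in> proj_set (feas_map h m n (pk k)) (vk k).
             LagrM M h gradx m n (vk k) (pk k) xk \<noteq> {}"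
      using e1 e2 e3
    proof eventually_elim
      case (elim k)
      define p where "p = pk k"
      define v where "v = vk k"
      have pU: "p \<in> U \<inter> D" using elim r1 pD by (auto simp: p_def)
      obtain z where z: "z \<in> F p" "dist z x0 < r2/8"
        using U'(3)[of p] elim pD unfolding p_def by (auto simp: dist_commute)
      have idv: "infdist v (F p) < r2/4"
      proof -
        have "infdist v (F p) \<le> dist v z" by (rule infdist_le[OF z(1)])
        also have "\<dots> \<le> dist v x0 + dist z x0" by (rule dist_triangle2)
        finally show ?thesis using z elim by (simp add: v_def)
      qed
      show ?case
      proof
        fix xk assume xk: "xk \<in> proj_set (feas_map h m n (pk k)) (vk k)"
        then have xF: "xk \<in> F p" and dx: "dist xk v = infdist v (F p)"
          by (auto simp: proj_set_def F_def p_def v_def)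
        have vnF: "v \<notin> F p" using vF' by (simp add: v_def p_def)
        have xv: "xk \<noteq> v" using xF vnF by auto
        have xx0: "dist xk x0 < r2/2"
        proof -
          have "dist xk x0 \<le> dist xk v + dist v x0" by (rule dist_triangle)
          moreover have "dist v x0 < r2/8" using elim by (simp add: v_def)
          ultimately show ?thesis using dx idv r2(1) by linarith
        qed
        show "LagrM M h gradx m n (vk k) (pk k) xk \<noteq> {}"
          unfolding p_def[symmetric] v_def[symmetric]
        proof (rule kkt[where h=h and gradx=gradx and p=p and x=xk and v=v and M=M and \<rho>="r2/2", OF mn grad _ xF[unfolded F_def] xv M])
          show "isCont (gradx i p) xk" if "i \<in> {1..n}" for i
            using cont_grad[OF that] by (rule cont_slice)
          show "r2/2 > 0" using r2 by simp
          fix y assume y: "y \<in> ball xk (r2/2)"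
          have "dist x0 y \<le> dist x0 xk + dist xk y" by (rule dist_triangle)
          then have "dist x0 y < r2" using y xx0 by (simp add: dist_commute)
          then have "y \<in> V" using r2(2) by auto
          then have iy: "infdist y (F p) \<le> M * residual h m n p y" using bnd pU by blast
          have "norm (xk - v) = infdist v (F p)" using dx by (simp add: dist_norm)
          also have "\<dots> \<le> infdist y (F p) + dist v y" by (rule infdist_triangle)
          finally show "norm (xk - v) \<le> norm (y - v) + M * residual h m n p y"
            using iy by (simp add: dist_norm norm_minus_commute)
        qed
      qed
    qed
  qed
qed



lemma core_ineq:
  fixes h :: "nat \<Rightarrow> 'g \<Rightarrow> 'h::real_inner \<Rightarrow> real" and gradx :: "nat \<Rightarrow> 'g \<Rightarrow> 'h \<Rightarrow> 'h"
  assumes mn: "m \<le> n"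
    and grad: "\<And>i x. i \<in> {1..n} \<Longrightarrow> (h i p has_derivative (\<lambda>u. gradx i p x \<bullet> u)) (at x)"
    and yF: "y \<in> feas_map h m n p" and yw: "y \<noteq> w"
    and lam: "lam \<in> LagrM M h gradx m n w p y" and M: "M > 0"
    and osc: "\<And>i \<tau>. i \<in> {1..n} \<Longrightarrow> \<tau> \<in> {0..1} \<Longrightarrow>
                norm (gradx i p (y + \<tau> *\<^sub>R (w - y)) - gradx i p y) \<le> 1/(2*M)"
  shows "norm (y - w) \<le> M * residual h m n p w + norm (y - w) / 2"
proof -
  define Dd where "Dd = norm (y - w)"
  define R where "R = residual h m n p w"
  have Dd: "Dd > 0" using yw by (simp add: Dd_def)
  have eq: "(1 / norm (y - w)) *\<^sub>R (y - w) + (\<Sum>i=1..n. lam i *\<^sub>R gradx i p y) = 0"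
    and sl: "\<And>i. i \<in> {1..m} \<Longrightarrow> 0 \<le> lam i \<and> lam i * h i p y = 0"
    and sb: "(\<Sum>i=1..n. \<bar>lam i\<bar>) \<le> M"
    using lam unfolding LagrM_def Lagr_def by auto
  have yF': "\<And>i. i \<in> {m+1..n} \<Longrightarrow> h i p y = 0" using yF by (auto simp: feas_map_def)
  have "((1 / norm (y - w)) *\<^sub>R (y - w) + (\<Sum>i=1..n. lam i *\<^sub>R gradx i p y)) \<bullet> (w - y) = 0"
    using eq by simp
  then have "(1 / norm (y - w)) * ((y - w) \<bullet> (w - y)) + (\<Sum>i=1..n. lam i * (gradx i p y \<bullet> (w - y))) = 0"
    by (simp add: inner_add_left inner_sum_left)
  moreover have "(y - w) \<bullet> (w - y) = - (Dd * Dd)"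
  proof -
    have "(y - w) \<bullet> (w - y) = - ((y - w) \<bullet> (y - w))"
      by (metis inner_minus_right minus_diff_eq)
    then show ?thesis by (simp add: Dd_def power2_norm_eq_inner[symmetric] power2_eq_square)
  qed
  ultimately have S: "(\<Sum>i=1..n. lam i * (gradx i p y \<bullet> (w - y))) = Dd"
    using Dd by (simp add: Dd_def)
  have trm: "lam i * (gradx i p y \<bullet> (w - y)) \<le> \<bar>lam i\<bar> * (R + Dd / (2*M))" if i: "i \<in> {1..n}" for i
  proof -
    define e where "e = h i p w - h i p y - gradx i p y \<bullet> (w - y)"
    have e: "\<bar>e\<bar> \<le> Dd * (1/(2*M))"
    proof -
      have "\<bar>e\<bar> \<le> norm (w - y) * (1/(2*M))"
        unfolding e_def by (rule lin_bound[OF grad[OF i]]) (rule osc[OF i])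
      then show ?thesis by (simp add: Dd_def norm_minus_commute)
    qed
    have a: "lam i * (h i p w - h i p y) \<le> \<bar>lam i\<bar> * R"
    proof (cases "i \<le> m")
      case True
      then have im: "i \<in> {1..m}" using i by auto
      have "lam i * (h i p w - h i p y) = lam i * h i p w" using sl[OF im] by (simp add: algebra_simps)
      also have "\<dots> \<le> lam i * R" using sl[OF im] res_ge_I[OF im, of h p w n] by (simp add: R_def mult_left_mono)
      finally show ?thesis using sl[OF im] by simp
    next
      case False
      then have im: "i \<in> {m+1..n}" using i by auto
      have "lam i * (h i p w - h i p y) = lam i * h i p w" using yF'[OF im] by simp
      also have "\<dots> \<le> \<bar>lam i\<bar> * \<bar>h i p w\<bar>" by (simp add: abs_mult[symmetric])
      also have "\<dots> \<le> \<bar>lam i\<bar> * R" using res_ge_I0[OF im, of h p w] by (simp add: R_def mult_left_mono)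
      finally show ?thesis .
    qed
    have b: "- (lam i * e) \<le> \<bar>lam i\<bar> * (Dd / (2*M))"
    proof -
      have "- (lam i * e) \<le> \<bar>lam i\<bar> * \<bar>e\<bar>" by (simp add: abs_mult[symmetric])
      also have "\<dots> \<le> \<bar>lam i\<bar> * (Dd * (1/(2*M)))" by (rule mult_left_mono[OF e]) simp
      finally show ?thesis by simp
    qed
    have "lam i * (gradx i p y \<bullet> (w - y)) = lam i * (h i p w - h i p y) - lam i * e"
      by (simp add: e_def algebra_simps)
    also have "\<dots> \<le> \<bar>lam i\<bar> * R + \<bar>lam i\<bar> * (Dd / (2*M))" using a b by linarith
    finally show ?thesis by (simp add: algebra_simps)
  qed
  have "Dd = (\<Sum>i=1..n. lam i * (gradx i p y \<bullet> (w - y)))" using S by simp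
  also have "\<dots> \<le> (\<Sum>i=1..n. \<bar>lam i\<bar> * (R + Dd / (2*M)))"
    by (rule sum_mono) (rule trm)
  also have "\<dots> = (\<Sum>i=1..n. \<bar>lam i\<bar>) * (R + Dd / (2*M))" by (simp add: sum_distrib_right)
  also have "\<dots> \<le> M * (R + Dd / (2*M))"
  proof (rule mult_right_mono[OF sb])
    show "0 \<le> R + Dd / (2*M)" using res_nonneg[of h m n p w] Dd M by (simp add: R_def)
  qed
  also have "\<dots> = M * R + Dd / 2" using M by (simp add: field_simps)
  finally show ?thesis by (simp add: Dd_def R_def)
qed



lemma closedF:
  fixes h :: "nat \<Rightarrow> 'g \<Rightarrow> 'h::real_normed_vector \<Rightarrow> real"
  assumes c: "\<And>i. i \<in> {1..n} \<Longrightarrow> continuous_on UNIV (h i p)" and mn: "m \<le> n"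
  shows "closed (feas_map h m n p)"
proof -
  have "feas_map h m n p = (\<Inter>i\<in>{1..m}. {x. h i p x \<le> 0}) \<inter> (\<Inter>i\<in>{m+1..n}. {x. h i p x = 0})"
    by (auto simp: feas_map_def)
  moreover have "closed (\<Inter>i\<in>{1..m}. {x. h i p x \<le> 0})"
  proof (rule closed_INT, rule ballI)
    fix i assume "i \<in> {1..m}"
    then have "continuous_on UNIV (h i p)" using c mn by auto
    then show "closed {x. h i p x \<le> 0}" by (rule closed_Collect_le) (auto intro: continuous_intros)
  qed
  moreover have "closed (\<Inter>i\<in>{m+1..n}. {x. h i p x = 0})"
  proof (rule closed_INT, rule ballI)
    fix i assume "i \<in> {m+1..n}"
    then have "continuous_on UNIV (h i p)" using c by auto
    then show "closed {x. h i p x = 0}" by (rule closed_Collect_eq) (auto intro: continuous_intros)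
  qed
  ultimately show ?thesis by (simp add: closed_Int)
qed



lemma dirB:
  fixes h :: "nat \<Rightarrow> 'g::real_normed_vector \<Rightarrow> 'h::{real_inner, complete_space} \<Rightarrow> real"
    and gradx :: "nat \<Rightarrow> 'g \<Rightarrow> 'h \<Rightarrow> 'h"
    and m n :: nat and p0 :: 'g and x0 :: 'h
  assumes mn: "m \<le> n"
    and grad: "\<And>i p x. i \<in> {1..n} \<Longrightarrow>
                 (h i p has_derivative (\<lambda>u. gradx i p x \<bullet> u)) (at x)"
    and cont_grad: "\<And>i. i \<in> {1..n} \<Longrightarrow> continuous_on UNIV (\<lambda>(p, x). gradx i p x)"
    and lsc: "lsc_rel (feas_map h m n) (dom_map (feas_map h m n)) p0 x0"
    and bb: "\<exists>M>0. \<forall>pk :: nat \<Rightarrow> 'g. \<forall>vk :: nat \<Rightarrow> 'h.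
        pk \<longlonglongrightarrow> p0 \<and> (\<forall>k. pk k \<in> dom_map (feas_map h m n)) \<and>
        vk \<longlonglongrightarrow> x0 \<and> (\<forall>k. vk k \<notin> feas_map h m n (pk k)) \<longrightarrow>
        (\<forall>\<^sub>F k in sequentially.
           \<forall>xk \<in> proj_set (feas_map h m n (pk k)) (vk k).
             LagrM M h gradx m n (vk k) (pk k) xk \<noteq> {})"
  shows "R_regular_rel h m n (dom_map (feas_map h m n)) p0 x0"
proof (rule ccontr)
  assume nreg: "\<not> R_regular_rel h m n (dom_map (feas_map h m n)) p0 x0"
  define F where "F = feas_map h m n"
  define D where "D = dom_map F"
  obtain M where M: "M > 0" and bM: "\<And>pk vk. pk \<longlonglongrightarrow> p0 \<Longrightarrow> (\<forall>k. pk k \<in> D) \<Longrightarrow>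
        vk \<longlonglongrightarrow> x0 \<Longrightarrow> (\<forall>k. vk k \<notin> F (pk k)) \<Longrightarrow>
        (\<forall>\<^sub>F k in sequentially. \<forall>xk \<in> proj_set (F (pk k)) (vk k). LagrM M h gradx m n (vk k) (pk k) xk \<noteq> {})"
    using bb unfolding F_def D_def by blast
  have hc: "isCont (h i p) x" if "i \<in> {1..n}" for i p x
    using has_derivative_continuous[OF grad[OF that]] by simp
  have hco: "continuous_on UNIV (h i p)" if "i \<in> {1..n}" for i p
    using hc[OF that] by (simp add: continuous_at_imp_continuous_on)
  have clF: "closed (F p)" for p unfolding F_def by (rule closedF[OF hco mn])
  have ex: "\<exists>x p. x \<in> ball x0 (1 / real (Suc k)) \<and> p \<in> ball p0 (1 / real (Suc k)) \<and> p \<in> D \<and>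
      real (Suc k) * residual h m n p x < infdist x (F p)" for k
  proof (rule ccontr)
    assume "\<not> ?thesis"
    then have "\<forall>x\<in>ball x0 (1 / real (Suc k)). \<forall>p\<in>ball p0 (1 / real (Suc k)) \<inter> D.
        infdist x (F p) \<le> real (Suc k) * residual h m n p x"
      by (meson IntD1 IntD2 not_less)
    then have "R_regular_rel h m n D p0 x0"
      unfolding R_regular_rel_def F_def
      by (intro exI[of _ "real (Suc k)"] conjI exI[of _ "ball p0 (1 / real (Suc k))"]
                exI[of _ "ball x0 (1 / real (Suc k))"]) auto
    then show False using nreg by (simp add: D_def F_def)
  qed
  then obtain X P where XP: "\<And>k. X k \<in> ball x0 (1 / real (Suc k)) \<and> P k \<in> ball p0 (1 / real (Suc k)) \<and> P k \<in> D \<and>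
      real (Suc k) * residual h m n (P k) (X k) < infdist (X k) (F (P k))"
    by metis
  define Dk where "Dk k = infdist (X k) (F (P k))" for k
  have Dk: "Dk k > 0" for k
    using XP[of k] res_nonneg[of h m n "P k" "X k"] unfolding Dk_def
    by (smt (verit) mult_nonneg_nonneg of_nat_0_le_iff)
  have Fne: "F (P k) \<noteq> {}" for k using XP[of k] by (auto simp: D_def dom_map_def)
  have exW: "\<exists>w. dist w (X k) < 1 / real (Suc (Suc k)) \<and> dist w (X k) < Dk k / real (Suc (Suc k)) \<and>
      residual h m n (P k) w \<le> residual h m n (P k) (X k) + Dk k / real (Suc (Suc k)) \<and>
      (\<exists>y\<in>F (P k). dist y w = infdist w (F (P k)))" for k
  proof -
    define a where "a = real (Suc (Suc k))"
    have a: "a > 0" by (simp add: a_def)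
    have eta: "Dk k / a > 0" using Dk[of k] a by simp
    obtain \<delta> where \<delta>: "\<delta> > 0" "\<And>w. dist w (X k) < \<delta> \<Longrightarrow>
        residual h m n (P k) w \<le> residual h m n (P k) (X k) + Dk k / a"
      using res_cont[where h=h and p="P k" and x="X k", OF mn hc eta] by blast
    define e where "e = min (min (1 / a) (Dk k / a)) \<delta>"
    have e: "e > 0" using a eta \<delta> by (simp add: e_def)
    obtain w where w: "dist w (X k) < e" "\<exists>y\<in>F (P k). dist y w = infdist w (F (P k))"
      using dense_proj[OF clF Fne e, of "X k"] by blast
    have "dist w (X k) < 1 / a" "dist w (X k) < Dk k / a" "dist w (X k) < \<delta>"
      using w(1) by (auto simp: e_def)
    then show ?thesis using w(2) \<delta>(2) unfolding a_def by blast
  qed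
  then obtain W where W: "\<And>k. dist (W k) (X k) < 1 / real (Suc (Suc k)) \<and> dist (W k) (X k) < Dk k / real (Suc (Suc k)) \<and>
      residual h m n (P k) (W k) \<le> residual h m n (P k) (X k) + Dk k / real (Suc (Suc k)) \<and>
      (\<exists>y\<in>F (P k). dist y (W k) = infdist (W k) (F (P k)))"
    by metis
  have Dw: "Dk k / 2 \<le> infdist (W k) (F (P k))" for k
  proof -
    have "Dk k \<le> infdist (W k) (F (P k)) + dist (X k) (W k)" unfolding Dk_def by (rule infdist_triangle)
    moreover have "Dk k / real (Suc (Suc k)) \<le> Dk k / 2"
      using Dk[of k] by (intro divide_left_mono) auto
    moreover have "dist (X k) (W k) < Dk k / real (Suc (Suc k))" using W[of k] by (simp add: dist_commute)
    ultimately show ?thesis by linarith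
  qed
  have WnF: "W k \<notin> F (P k)" for k
  proof
    assume "W k \<in> F (P k)"
    then have "infdist (W k) (F (P k)) = 0" by simp
    then show False using Dw[of k] Dk[of k] by simp
  qed
  have Plim: "P \<longlonglongrightarrow> p0"
    by (rule seq_lim[where C=1]) (use XP in \<open>auto simp: dist_commute less_imp_le\<close>)
  have Xlim: "X \<longlonglongrightarrow> x0"
    by (rule seq_lim[where C=1]) (use XP in \<open>auto simp: dist_commute less_imp_le\<close>)
  have Wlim: "W \<longlonglongrightarrow> x0"
  proof (rule seq_lim[where C=2])
    fix k
    have "dist (W k) x0 \<le> dist (W k) (X k) + dist (X k) x0" by (rule dist_triangle)
    moreover have "1 / real (Suc (Suc k)) \<le> 1 / real (Suc k)" by (intro divide_left_mono) auto
    moreover have "dist (X k) x0 < 1 / real (Suc k)" using XP[of k] by (simp add: dist_commute)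
    ultimately show "dist (W k) x0 \<le> 2 / real (Suc k)" using W[of k] by simp
  qed
  have ev0: "\<forall>\<^sub>F k in sequentially. \<forall>xk \<in> proj_set (F (P k)) (W k). LagrM M h gradx m n (W k) (P k) xk \<noteq> {}"
    by (rule bM[OF Plim _ Wlim]) (use XP WnF in auto)
  have e4: "1 / (4 * M) > 0" using M by simp
  obtain \<delta> where \<delta>: "\<delta> > 0" and gnear: "\<And>i p z. i \<in> {1..n} \<Longrightarrow> dist p p0 < \<delta> \<Longrightarrow> dist z x0 < \<delta> \<Longrightarrow>
      dist (gradx i p z) (gradx i p0 x0) < 1 / (4 * M)"
    using joint_near_fin[where I="{1..n}" and f=gradx and pc=p0 and xc=x0, OF _ cont_grad e4] by auto
  have d16: "\<delta> / 16 > 0" using \<delta> by simp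
  obtain U' where U': "open U'" "p0 \<in> U'" "\<And>p. p \<in> U' \<inter> D \<Longrightarrow> F p \<inter> ball x0 (\<delta>/16) \<noteq> {}"
    using lsc d16 unfolding lsc_rel_def F_def D_def by (metis centre_in_ball open_ball)
  have ev1: "eventually (\<lambda>k. P k \<in> U') sequentially" using Plim U'(1,2) by (rule topological_tendstoD)
  have ev2: "eventually (\<lambda>k. dist (P k) p0 < \<delta>) sequentially" using Plim \<delta> by (rule tendstoD)
  have ev3: "eventually (\<lambda>k. dist (X k) x0 < \<delta>/16) sequentially" using Xlim d16 by (rule tendstoD)
  have ev4: "eventually (\<lambda>k. dist (W k) x0 < \<delta>/16) sequentially" using Wlim d16 by (rule tendstoD)
  obtain N :: nat where N: "8 * M < real N" using reals_Archimedean2 by blast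
  have ev5: "eventually (\<lambda>k. 8 * M < real (Suc k)) sequentially"
    unfolding eventually_sequentially using N by (intro exI[of _ N]) auto
  have "eventually (\<lambda>k. (\<forall>xk \<in> proj_set (F (P k)) (W k). LagrM M h gradx m n (W k) (P k) xk \<noteq> {}) \<and>
      P k \<in> U' \<and> dist (P k) p0 < \<delta> \<and> dist (X k) x0 < \<delta>/16 \<and> dist (W k) x0 < \<delta>/16 \<and> 8 * M < real (Suc k)) sequentially"
    using ev0 ev1 ev2 ev3 ev4 ev5 by eventually_elim auto
  then obtain k where k: "\<forall>xk \<in> proj_set (F (P k)) (W k). LagrM M h gradx m n (W k) (P k) xk \<noteq> {}"
    "P k \<in> U'" "dist (P k) p0 < \<delta>" "dist (X k) x0 < \<delta>/16" "dist (W k) x0 < \<delta>/16" "8 * M < real (Suc k)"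
    using eventually_happens'[OF sequentially_bot] by blast
  define p where "p = P k"
  define x where "x = X k"
  define w where "w = W k"
  define d where "d = Dk k"
  define a where "a = real (Suc k)"
  have a: "a > 0" by (simp add: a_def)
  have d: "d > 0" using Dk by (simp add: d_def)
  obtain z where z: "z \<in> F p" "dist x0 z < \<delta>/16"
    using U'(3)[of p] k(2) XP[of k] by (auto simp: p_def)
  have dsmall: "d < \<delta>/8"
  proof -
    have "d \<le> dist x z" unfolding d_def Dk_def x_def p_def by (rule infdist_le[OF z(1)[unfolded p_def]])
    also have "\<dots> \<le> dist x x0 + dist x0 z" by (rule dist_triangle)
    finally show ?thesis using z(2) k(4) by (simp add: x_def)
  qed
  obtain y where y: "y \<in> F p" "dist y w = infdist w (F p)" using W[of k] by (auto simp: p_def w_def)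
  have yproj: "y \<in> proj_set (F p) w" using y by (simp add: proj_set_def)
  then obtain lam where lam: "lam \<in> LagrM M h gradx m n w p y" using k(1) by (auto simp: p_def w_def)
  have wx: "dist w x < d / (a + 1)" using W[of k] by (simp add: w_def x_def d_def a_def)
  have da: "d / (a + 1) \<le> d" using d a by (simp add: divide_le_eq)
  have Dd: "dist y w \<le> d + dist w x"
  proof -
    have "infdist w (F p) \<le> infdist x (F p) + dist w x" by (rule infdist_triangle)
    then show ?thesis using y(2) by (simp add: d_def Dk_def x_def p_def)
  qed
  have yw: "y \<noteq> w" using y(1) WnF[of k] by (auto simp: p_def w_def)
  have yx0: "dist y x0 < \<delta>/2"
  proof -
    have "dist y x0 \<le> dist y w + dist w x0" by (rule dist_triangle)
    moreover have "dist w x0 < \<delta>/16" using k(5) by (simp add: w_def)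
    ultimately show ?thesis using Dd wx da dsmall \<delta> by linarith
  qed
  have wx0: "dist w x0 < \<delta>/2" using k(5) \<delta> by (simp add: w_def)
  have osc: "norm (gradx i p (y + \<tau> *\<^sub>R (w - y)) - gradx i p y) \<le> 1/(2*M)"
    if i: "i \<in> {1..n}" and \<tau>: "\<tau> \<in> {0..1}" for i \<tau>
  proof -
    define \<xi> where "\<xi> = y + \<tau> *\<^sub>R (w - y)"
    have "\<xi> - x0 = (1 - \<tau>) *\<^sub>R (y - x0) + \<tau> *\<^sub>R (w - x0)" by (simp add: \<xi>_def algebra_simps)
    then have "norm (\<xi> - x0) \<le> (1 - \<tau>) * norm (y - x0) + \<tau> * norm (w - x0)"
      using \<tau> by (metis (no_types, lifting) atLeastAtMost_iff diff_ge_0_iff_ge norm_scaleR norm_triangle_ineq abs_of_nonneg)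
    also have "\<dots> \<le> (1 - \<tau>) * (\<delta>/2) + \<tau> * (\<delta>/2)"
      using \<tau> yx0 wx0 by (intro add_mono mult_left_mono) (auto simp: dist_norm)
    also have "\<dots> = \<delta>/2" by (simp add: field_simps)
    finally have xi: "dist \<xi> x0 < \<delta>" using \<delta> by (simp add: dist_norm)
    have pp: "dist p p0 < \<delta>" using k(3) by (simp add: p_def)
    have g1: "dist (gradx i p \<xi>) (gradx i p0 x0) < 1/(4*M)" by (rule gnear[OF i pp xi])
    have g2: "dist (gradx i p y) (gradx i p0 x0) < 1/(4*M)" using yx0 \<delta> by (intro gnear[OF i pp]) simp
    have "dist (gradx i p \<xi>) (gradx i p y) \<le> dist (gradx i p \<xi>) (gradx i p0 x0) + dist (gradx i p y) (gradx i p0 x0)"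
      by (rule dist_triangle2)
    also have "\<dots> \<le> 1/(2*M)" using g1 g2 by simp
    finally show ?thesis by (simp add: \<xi>_def dist_norm)
  qed
  have core: "norm (y - w) \<le> M * residual h m n p w + norm (y - w) / 2"
    by (rule core_ineq[OF mn grad y(1)[unfolded F_def] yw lam M osc])
  define R where "R = residual h m n p w"
  define Rx where "Rx = residual h m n p x"
  have R0: "R \<ge> 0" by (simp add: R_def res_nonneg)
  have yw2: "dist y w \<le> 2 * M * R"
    using core by (simp add: dist_norm R_def)
  have Dd2: "d / 2 \<le> dist y w" using Dw[of k] y(2) by (simp add: d_def p_def w_def)
  have rx: "a * Rx < d" using XP[of k] by (simp add: a_def Rx_def d_def Dk_def p_def x_def)
  have rw: "R \<le> Rx + d / (a + 1)" using W[of k] by (simp add: R_def Rx_def a_def d_def p_def w_def x_def)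
  have ad: "a * (d / (a + 1)) \<le> d"
  proof -
    have "a * (d / (a + 1)) = d * (a / (a + 1))" by simp
    also have "\<dots> \<le> d * 1" using d a by (intro mult_left_mono) auto
    finally show ?thesis by simp
  qed
  have "a * R \<le> a * (Rx + d / (a + 1))" using rw a by (intro mult_left_mono) auto
  also have "\<dots> = a * Rx + a * (d / (a + 1))" by (simp add: distrib_left)
  finally have aR: "a * R < 2 * d" using rx ad by linarith
  have "a * (d / 2) \<le> a * dist y w" using Dd2 a by (intro mult_left_mono) auto
  also have "\<dots> \<le> a * (2 * M * R)" using yw2 a by (intro mult_left_mono) auto
  also have "\<dots> = 2 * M * (a * R)" by (simp add: algebra_simps)
  also have "\<dots> \<le> 2 * M * (2 * d)" using aR M by (intro mult_left_mono) auto
  finally have "a * d \<le> (8 * M) * d" by (simp add: algebra_simps)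
  then have "a \<le> 8 * M" using d by simp
  then show False using k(6) by (simp add: a_def)
qed



theorem theorem8:
  fixes h :: "nat \<Rightarrow> 'g::real_normed_vector \<Rightarrow> 'h::{real_inner, complete_space} \<Rightarrow> real"
    and gradx :: "nat \<Rightarrow> 'g \<Rightarrow> 'h \<Rightarrow> 'h"
    and m n :: nat and p0 :: 'g and x0 :: 'h
  assumes mn: "m \<le> n"
    and cont_h: "\<And>i. i \<in> {1..n} \<Longrightarrow> continuous_on UNIV (\<lambda>(p, x). h i p x)"
    and grad: "\<And>i p x. i \<in> {1..n} \<Longrightarrow>
                 (h i p has_derivative (\<lambda>u. gradx i p x \<bullet> u)) (at x)"
    and cont_grad: "\<And>i. i \<in> {1..n} \<Longrightarrow> continuous_on UNIV (\<lambda>(p, x). gradx i p x)"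
    and gr: "(p0, x0) \<in> graph_map (feas_map h m n)"
    and lsc: "lsc_rel (feas_map h m n) (dom_map (feas_map h m n)) p0 x0"
  shows "R_regular_rel h m n (dom_map (feas_map h m n)) p0 x0 \<longleftrightarrow>
     (\<exists>M>0. \<forall>pk :: nat \<Rightarrow> 'g. \<forall>vk :: nat \<Rightarrow> 'h.
        pk \<longlonglongrightarrow> p0 \<and> (\<forall>k. pk k \<in> dom_map (feas_map h m n)) \<and>
        vk \<longlonglongrightarrow> x0 \<and> (\<forall>k. vk k \<notin> feas_map h m n (pk k)) \<longrightarrow>
        (\<forall>\<^sub>F k in sequentially.
           \<forall>xk \<in> proj_set (feas_map h m n (pk k)) (vk k).
             LagrM M h gradx m n (vk k) (pk k) xk \<noteq> {}))"
proof
  assume "R_regular_rel h m n (dom_map (feas_map h m n)) p0 x0"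
  then show "\<exists>M>0. \<forall>pk :: nat \<Rightarrow> 'g. \<forall>vk :: nat \<Rightarrow> 'h.
        pk \<longlonglongrightarrow> p0 \<and> (\<forall>k. pk k \<in> dom_map (feas_map h m n)) \<and>
        vk \<longlonglongrightarrow> x0 \<and> (\<forall>k. vk k \<notin> feas_map h m n (pk k)) \<longrightarrow>
        (\<forall>\<^sub>F k in sequentially.
           \<forall>xk \<in> proj_set (feas_map h m n (pk k)) (vk k).
             LagrM M h gradx m n (vk k) (pk k) xk \<noteq> {})"
    using dirA[where h=h and gradx=gradx, OF mn grad cont_grad lsc] by blast
next
  assume "\<exists>M>0. \<forall>pk :: nat \<Rightarrow> 'g. \<forall>vk :: nat \<Rightarrow> 'h.
        pk \<longlonglongrightarrow> p0 \<and> (\<forall>k. pk k \<in> dom_map (feas_map h m n)) \<and>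
        vk \<longlonglongrightarrow> x0 \<and> (\<forall>k. vk k \<notin> feas_map h m n (pk k)) \<longrightarrow>
        (\<forall>\<^sub>F k in sequentially.
           \<forall>xk \<in> proj_set (feas_map h m n (pk k)) (vk k).
             LagrM M h gradx m n (vk k) (pk k) xk \<noteq> {})"
  then show "R_regular_rel h m n (dom_map (feas_map h m n)) p0 x0"
    using dirB[where h=h and gradx=gradx, OF mn grad cont_grad lsc] by blast
qed

end
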